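(* Let $G$ be a partial cube and $H$ an isometric subgraph of $G$ isomorphic to the full subdivision of $K_m$ such that (a) no vertex of $G$ is adjacent to all original vertices of $H$, (b) $\mathrm{conv}(H)$ is isomorphic neither to $Q_m^-$ nor to $Q_m^{--}$, and (c) $H$ is inclusion-minimal among isometric subgraphs of $G$ that are full subdivisions of complete graphs and satisfy (a) and (b). Then $\mathrm{conv}(H)$ is isomorphic to a member of $\mathcal Q^-$.
   Context: Partial cube: isometric subgraph of a hypercube. Convex subgraph: contains all shortest paths between its vertices; $\mathrm{conv}(S)$ is the smallest convex subgraph containing $S$. The full subdivision of a graph replaces each edge by a path of length 2; the vertices corresponding to vertices of the original graph are the original vertices. For a vertex $v$ of $Q_n$ with antipodal vertex $-v$: $Q_n^-=Q_n-\{-v\}$; $Q_n^{--}$ is $Q_n$ minus two antipodal vertices; for $n\ge4$, $Q_n^{-*}$ is $Q_n^-$ minus exactly one neighbor of $v$ and $Q_n^{--}(m)$ ($1\le m\le n$) is $Q_n^-$ minus $v$ and $m$ neighbors of $v$. $\mathcal Q^-=\{Q_n^{-*},Q_n^{--}(m)\mid n\ge4,1\le m\le n\}$. *)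

theory Defs
  imports Main
begin

record 'a graph =
  verts :: "'a set"
  arcs :: "('a \<times> 'a) set"

definition graph :: "'a graph \<Rightarrow> bool" where
  "graph G \<longleftrightarrow> arcs G \<subseteq> verts G \<times> verts G
     \<and> (\<forall>u v. (u, v) \<in> arcs G \<longrightarrow> (v, u) \<in> arcs G)
     \<and> (\<forall>u. (u, u) \<notin> arcs G)"

definition walk :: "'a graph \<Rightarrow> 'a list \<Rightarrow> bool" where
  "walk G p \<longleftrightarrow> p \<noteq> [] \<and> set p \<subseteq> verts G
     \<and> (\<forall>i. Suc i < length p \<longrightarrow> (p ! i, p ! Suc i) \<in> arcs G)"

definition walk_betw :: "'a graph \<Rightarrow> 'a \<Rightarrow> 'a list \<Rightarrow> 'a \<Rightarrow> bool" where
  "walk_betw G u p v \<longleftrightarrow> walk G p \<and> hd p = u \<and> last p = v"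

definition connected_graph :: "'a graph \<Rightarrow> bool" where
  "connected_graph G \<longleftrightarrow> (\<forall>u\<in>verts G. \<forall>v\<in>verts G. \<exists>p. walk_betw G u p v)"

definition gdist :: "'a graph \<Rightarrow> 'a \<Rightarrow> 'a \<Rightarrow> nat" where
  "gdist G u v = (LEAST n. \<exists>p. walk_betw G u p v \<and> length p = Suc n)"

definition subgraph :: "'a graph \<Rightarrow> 'a graph \<Rightarrow> bool" where
  "subgraph H G \<longleftrightarrow> graph H \<and> verts H \<subseteq> verts G \<and> arcs H \<subseteq> arcs G"

definition isometric_subgraph :: "'a graph \<Rightarrow> 'a graph \<Rightarrow> bool" where
  "isometric_subgraph H G \<longleftrightarrow> subgraph H G \<and> connected_graph H
     \<and> (\<forall>u\<in>verts H. \<forall>v\<in>verts H. gdist H u v = gdist G u v)"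

definition induced :: "'a graph \<Rightarrow> 'a set \<Rightarrow> 'a graph" where
  "induced G S = \<lparr>verts = S, arcs = arcs G \<inter> (S \<times> S)\<rparr>"

definition isomorphic :: "'a graph \<Rightarrow> 'b graph \<Rightarrow> bool" where
  "isomorphic G H \<longleftrightarrow> (\<exists>f. bij_betw f (verts G) (verts H)
     \<and> (\<forall>u\<in>verts G. \<forall>v\<in>verts G. (u, v) \<in> arcs G \<longleftrightarrow> (f u, f v) \<in> arcs H))"

definition graph_iso :: "('a \<Rightarrow> 'b) \<Rightarrow> 'a graph \<Rightarrow> 'b graph \<Rightarrow> bool" where
  "graph_iso f G H \<longleftrightarrow> bij_betw f (verts G) (verts H)
     \<and> (\<forall>u\<in>verts G. \<forall>v\<in>verts G. (u, v) \<in> arcs G \<longleftrightarrow> (f u, f v) \<in> arcs H)"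

text \<open>The coordinate set
is taken inside the vertex type; this loses no generality, since the number of
coordinates needed (Theta-classes) never exceeds the number of vertices (or is
finite and at most |V|-1).\<close>

definition partial_cube :: "'a graph \<Rightarrow> bool" where
  "partial_cube G \<longleftrightarrow> graph G \<and> connected_graph G \<and>
     (\<exists>f :: 'a \<Rightarrow> 'a set. (\<forall>v\<in>verts G. finite (f v)) \<and>
        (\<forall>u\<in>verts G. \<forall>v\<in>verts G. gdist G u v = card ((f u - f v) \<union> (f v - f u))))"

definition hypercube :: "nat \<Rightarrow> nat set graph" where
  "hypercube n = \<lparr>verts = Pow {0..<n},
     arcs = {(x, y). x \<subseteq> {0..<n} \<and> y \<subseteq> {0..<n} \<and> card ((x - y) \<union> (y - x)) = 1}\<rparr>"

text \<open>Taking v = {} (so -v = {0..<n}); the neighbours of v are the singletons.\<close>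
definition Qminus :: "nat \<Rightarrow> nat set graph" where
  "Qminus n = induced (hypercube n) (Pow {0..<n} - {{0..<n}})"

definition Qminusminus :: "nat \<Rightarrow> nat set graph" where
  "Qminusminus n = induced (hypercube n) (Pow {0..<n} - {{0..<n}, {}})"

text \<open>Q_n^{-*}: Q_n^- minus exactly one neighbour of v (all choices isomorphic).\<close>
definition Qminusstar :: "nat \<Rightarrow> nat set graph" where
  "Qminusstar n = induced (hypercube n) (Pow {0..<n} - {{0..<n}, {0}})"

text \<open>Q_n^{--}(m): Q_n^- minus v and m neighbours of v (all choices isomorphic).\<close>
definition Qminusminus_m :: "nat \<Rightarrow> nat \<Rightarrow> nat set graph" where
  "Qminusminus_m n m = induced (hypercube n)
     (Pow {0..<n} - ({{0..<n}, {}} \<union> {{i} | i. i < m}))"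

definition iso_to_Qminus_family :: "'a graph \<Rightarrow> bool" where
  "iso_to_Qminus_family G \<longleftrightarrow> (\<exists>n\<ge>4. isomorphic G (Qminusstar n)
     \<or> (\<exists>m. 1 \<le> m \<and> m \<le> n \<and> isomorphic G (Qminusminus_m n m)))"

text \<open>Full subdivision of K_m: original vertices Inl i (i < m), subdivision
vertices Inr {i,j} (i \<noteq> j < m), with Inl i adjacent to Inr e iff i \<in> e.\<close>
definition full_subdiv_K :: "nat \<Rightarrow> (nat + nat set) graph" where
  "full_subdiv_K m = \<lparr>verts = Inl ` {0..<m} \<union> Inr ` {{i, j} | i j. i < m \<and> j < m \<and> i \<noteq> j},
     arcs = {(Inl i, Inr e) | i e. i < m \<and> i \<in> e \<and> (\<exists>j<m. j \<noteq> i \<and> e = {i, j})}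
          \<union> {(Inr e, Inl i) | i e. i < m \<and> i \<in> e \<and> (\<exists>j<m. j \<noteq> i \<and> e = {i, j})}\<rparr>"

definition convex_set :: "'a graph \<Rightarrow> 'a set \<Rightarrow> bool" where
  "convex_set G S \<longleftrightarrow> S \<subseteq> verts G \<and>
     (\<forall>u\<in>S. \<forall>v\<in>S. \<forall>p. walk_betw G u p v \<and> length p = Suc (gdist G u v) \<longrightarrow> set p \<subseteq> S)"

definition conv :: "'a graph \<Rightarrow> 'a graph \<Rightarrow> 'a graph" where
  "conv G H = induced G (\<Inter>{S. convex_set G S \<and> verts H \<subseteq> S})"

definition cond_ab :: "'a graph \<Rightarrow> 'a graph \<Rightarrow> nat \<Rightarrow> (nat + nat set \<Rightarrow> 'a) \<Rightarrow> bool" where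
  "cond_ab G H m \<phi> \<longleftrightarrow> graph_iso \<phi> (full_subdiv_K m) H
     \<and> \<not> (\<exists>x\<in>verts G. \<forall>i<m. (x, \<phi> (Inl i)) \<in> arcs G)
     \<and> \<not> isomorphic (conv G H) (Qminus m)
     \<and> \<not> isomorphic (conv G H) (Qminusminus m)"

definition good_subdivision :: "'a graph \<Rightarrow> 'a graph \<Rightarrow> bool" where
  "good_subdivision G H \<longleftrightarrow> isometric_subgraph H G \<and> (\<exists>m \<phi>. cond_ab G H m \<phi>)"

end

theory Submission
  imports Defs
begin


definition sd :: "'b set \<Rightarrow> 'b set \<Rightarrow> 'b set" where
  "sd A B = (A - B) \<union> (B - A)"

lemma walk_single: "walk G [x] \<longleftrightarrow> x \<in> verts G"
  unfolding walk_def by auto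

lemma walk_Cons_Cons: "walk G (x # y # xs) \<longleftrightarrow> x \<in> verts G \<and> (x, y) \<in> arcs G \<and> walk G (y # xs)"
proof
  assume w: "walk G (x # y # xs)"
  have "(x,y) \<in> arcs G" using w unfolding walk_def by (metis Suc_less_eq length_Cons nth_Cons_0 nth_Cons_Suc zero_less_Suc)
  moreover have "walk G (y # xs)" unfolding walk_def
  proof (intro conjI allI impI)
    show "set (y # xs) \<subseteq> verts G" using w unfolding walk_def by auto
  next
    fix i assume "Suc i < length (y # xs)"
    then have "Suc (Suc i) < length (x # y # xs)" by simp
    then have "((x # y # xs) ! Suc i, (x # y # xs) ! Suc (Suc i)) \<in> arcs G" using w unfolding walk_def by blast
    then show "((y # xs) ! i, (y # xs) ! Suc i) \<in> arcs G" by simp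
  qed simp
  ultimately show "x \<in> verts G \<and> (x, y) \<in> arcs G \<and> walk G (y # xs)" using w unfolding walk_def by auto
next
  assume a: "x \<in> verts G \<and> (x, y) \<in> arcs G \<and> walk G (y # xs)"
  show "walk G (x # y # xs)" unfolding walk_def
  proof (intro conjI allI impI)
    show "set (x # y # xs) \<subseteq> verts G" using a unfolding walk_def by auto
  next
    fix i assume "Suc i < length (x # y # xs)"
    then show "((x # y # xs) ! i, (x # y # xs) ! Suc i) \<in> arcs G"
      using a unfolding walk_def by (cases i) auto
  qed simp
qed

lemma walk_snoc: "walk G xs \<Longrightarrow> (last xs, y) \<in> arcs G \<Longrightarrow> y \<in> verts G \<Longrightarrow> walk G (xs @ [y])"
  unfolding walk_def
proof (intro conjI allI impI)
  fix i assume w: "xs \<noteq> [] \<and> set xs \<subseteq> verts G \<and> (\<forall>i. Suc i < length xs \<longrightarrow> (xs ! i, xs ! Suc i) \<in> arcs G)"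
    and l: "(last xs, y) \<in> arcs G" and i: "Suc i < length (xs @ [y])"
  show "((xs @ [y]) ! i, (xs @ [y]) ! Suc i) \<in> arcs G"
  proof (cases "Suc i < length xs")
    case True then show ?thesis using w by (simp add: nth_append)
  next
    case False
    then have "Suc i = length xs" using i by simp
    then have "i = length xs - 1" by simp
    then show ?thesis using w l \<open>Suc i = length xs\<close> by (simp add: nth_append last_conv_nth)
  qed
qed auto

lemma walk_take: "walk G p \<Longrightarrow> walk G (take (Suc i) p)"
  unfolding walk_def by (auto dest: in_set_takeD)

lemma walk_drop: "walk G p \<Longrightarrow> i < length p \<Longrightarrow> walk G (drop i p)"
  unfolding walk_def by (auto dest: in_set_dropD)

lemma gdist_le: "walk_betw G u p v \<Longrightarrow> gdist G u v \<le> length p - 1"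
  unfolding gdist_def
proof (rule Least_le)
  assume w: "walk_betw G u p v"
  then have "p \<noteq> []" unfolding walk_betw_def walk_def by simp
  then have "length p = Suc (length p - 1)" by simp
  then show "\<exists>q. walk_betw G u q v \<and> length q = Suc (length p - 1)" using w by blast
qed

lemma gdist_walk: "connected_graph G \<Longrightarrow> u \<in> verts G \<Longrightarrow> v \<in> verts G \<Longrightarrow>
   \<exists>p. walk_betw G u p v \<and> length p = Suc (gdist G u v)"
proof -
  assume c: "connected_graph G" "u \<in> verts G" "v \<in> verts G"
  then obtain p where p: "walk_betw G u p v" unfolding connected_graph_def by blast
  then have "\<exists>n p. walk_betw G u p v \<and> length p = Suc n"
  proof -
    have "p \<noteq> []" using p unfolding walk_betw_def walk_def by simp
    then have "length p = Suc (length p - 1)" by simp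
    then show ?thesis using p by blast
  qed
  then show ?thesis unfolding gdist_def by (rule LeastI_ex)
qed


lemma sd_tri: "finite A \<Longrightarrow> finite B \<Longrightarrow> finite C \<Longrightarrow> card (sd A C) \<le> card (sd A B) + card (sd B C)"
proof -
  assume f: "finite A" "finite B" "finite C"
  have "sd A C \<subseteq> sd A B \<union> sd B C" unfolding sd_def by auto
  then have "card (sd A C) \<le> card (sd A B \<union> sd B C)" using f by (intro card_mono) (auto simp: sd_def)
  also have "\<dots> \<le> card (sd A B) + card (sd B C)" by (rule card_Un_le)
  finally show ?thesis .
qed

lemma sd_between: "finite A \<Longrightarrow> finite B \<Longrightarrow> finite C \<Longrightarrow> card (sd A B) + card (sd B C) \<le> card (sd A C)
  \<Longrightarrow> A \<inter> C \<subseteq> B \<and> B \<subseteq> A \<union> C"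
proof -
  assume f: "finite A" "finite B" "finite C" and le: "card (sd A B) + card (sd B C) \<le> card (sd A C)"
  have fin: "finite (sd A B)" "finite (sd B C)" using f by (auto simp: sd_def)
  have "sd A C \<subseteq> sd A B \<union> sd B C" unfolding sd_def by auto
  then have "card (sd A C) \<le> card (sd A B \<union> sd B C)" using fin by (intro card_mono) auto
  also have "\<dots> = card (sd A B) + card (sd B C) - card (sd A B \<inter> sd B C)"
    using card_Un_Int[OF fin] by simp
  finally have "card (sd A C) \<le> card (sd A B) + card (sd B C) - card (sd A B \<inter> sd B C)" .
  moreover have "card (sd A B \<inter> sd B C) \<le> card (sd A B)" using fin by (intro card_mono) auto
  ultimately have "card (sd A B \<inter> sd B C) = 0" using le by linarith
  then have "sd A B \<inter> sd B C = {}" using fin by simp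
  then show ?thesis unfolding sd_def by blast
qed

lemma sd_0: "finite A \<Longrightarrow> finite B \<Longrightarrow> card (sd A B) = 0 \<longleftrightarrow> A = B"
  unfolding sd_def by auto

locale pc =
  fixes G :: "'a graph" and f :: "'a \<Rightarrow> 'a set"
  assumes graphG: "graph G" and conn: "connected_graph G"
    and fin: "\<And>v. v \<in> verts G \<Longrightarrow> finite (f v)"
    and ham: "\<And>u v. u \<in> verts G \<Longrightarrow> v \<in> verts G \<Longrightarrow> gdist G u v = card (sd (f u) (f v))"
begin

lemma gdist0: "u \<in> verts G \<Longrightarrow> v \<in> verts G \<Longrightarrow> gdist G u v = 0 \<Longrightarrow> u = v"
  using gdist_walk[OF conn, of u v] unfolding walk_betw_def
  by (metis One_nat_def length_Suc_conv last_ConsL list.sel(1) list.size(3) Suc_length_conv length_0_conv)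

lemma f_inj: "inj_on f (verts G)"
proof (rule inj_onI)
  fix u v assume "u \<in> verts G" "v \<in> verts G" "f u = f v"
  then show "u = v" using gdist0 ham by (simp add: sd_def)
qed

lemma arc_gdist: "(u, v) \<in> arcs G \<Longrightarrow> gdist G u v = 1"
proof -
  assume a: "(u, v) \<in> arcs G"
  then have uv: "u \<in> verts G" "v \<in> verts G" using graphG unfolding graph_def by auto
  have "u \<noteq> v" using a graphG unfolding graph_def by auto
  have "walk_betw G u [u, v] v" using a uv unfolding walk_betw_def by (simp add: walk_Cons_Cons walk_single)
  then have "gdist G u v \<le> 1" using gdist_le by fastforce
  moreover have "gdist G u v \<noteq> 0" using gdist0 uv \<open>u \<noteq> v\<close> by blast
  ultimately show ?thesis by simp
qed

lemma gdist1_arc: "u \<in> verts G \<Longrightarrow> v \<in> verts G \<Longrightarrow> gdist G u v = 1 \<Longrightarrow> (u, v) \<in> arcs G"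
proof -
  assume uv: "u \<in> verts G" "v \<in> verts G" "gdist G u v = 1"
  then obtain p where p: "walk_betw G u p v" "length p = 2" using gdist_walk[OF conn, of u v] by auto
  then obtain a b where "p = [a, b]" by (metis (no_types, lifting) One_nat_def Suc_1 length_0_conv length_Suc_conv)
  then show ?thesis using p unfolding walk_betw_def by (auto simp add: walk_Cons_Cons)
qed

lemma arc_iff: "u \<in> verts G \<Longrightarrow> v \<in> verts G \<Longrightarrow> (u, v) \<in> arcs G \<longleftrightarrow> card (sd (f u) (f v)) = 1"
  using arc_gdist gdist1_arc ham by metis

lemma walk_ham: "walk_betw G u p v \<Longrightarrow> card (sd (f u) (f v)) \<le> length p - 1"
proof -
  assume w: "walk_betw G u p v"
  then have "u \<in> verts G" "v \<in> verts G" unfolding walk_betw_def walk_def by auto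
  then show ?thesis using gdist_le[OF w] ham by simp
qed

lemma geodesic_between:
  assumes w: "walk_betw G u p v" and l: "length p = Suc (gdist G u v)" and x: "x \<in> set p"
  shows "f u \<inter> f v \<subseteq> f x \<and> f x \<subseteq> f u \<union> f v"
proof -
  obtain i where i: "i < length p" "p ! i = x" using x by (meson in_set_conv_nth)
  have wk: "walk G p" and hd: "hd p = u" and la: "last p = v" using w unfolding walk_betw_def by auto
  have ne: "p \<noteq> []" using wk unfolding walk_def by simp
  have uv: "u \<in> verts G" "v \<in> verts G" using w unfolding walk_betw_def walk_def by auto
  have xv: "x \<in> verts G" using wk x unfolding walk_def by auto
  have lt: "last (take (Suc i) p) = p ! i" using i(1)
    by (subst last_conv_nth) (auto simp: min_def intro: arg_cong[where f="\<lambda>k. p ! k"])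
  have w1: "walk_betw G u (take (Suc i) p) x" unfolding walk_betw_def
    using walk_take[OF wk, of i] hd i ne lt by (simp add: hd_take)
  have w2: "walk_betw G x (drop i p) v" unfolding walk_betw_def
    using walk_drop[OF wk i(1)] la i ne by (simp add: hd_drop_conv_nth)
  have "card (sd (f u) (f x)) \<le> i" using walk_ham[OF w1] i by simp
  moreover have "card (sd (f x) (f v)) \<le> length p - i - 1" using walk_ham[OF w2] i by simp
  ultimately have "card (sd (f u) (f x)) + card (sd (f x) (f v)) \<le> card (sd (f u) (f v))"
    using l ham[OF uv] i by simp
  then show ?thesis by (rule sd_between[OF fin[OF uv(1)] fin[OF xv] fin[OF uv(2)]])
qed

end


lemma graph_iso_isomorphic: "graph_iso h A B \<Longrightarrow> isomorphic A B"
  unfolding graph_iso_def isomorphic_def by blast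

lemma isomorphic_graph_iso: "isomorphic A B \<Longrightarrow> \<exists>h. graph_iso h A B"
  unfolding graph_iso_def isomorphic_def by blast

lemma graph_iso_inv: "graph_iso h A B \<Longrightarrow> graph_iso (the_inv_into (verts A) h) B A"
proof -
  assume g: "graph_iso h A B"
  then have b: "bij_betw h (verts A) (verts B)" unfolding graph_iso_def by simp
  let ?k = "the_inv_into (verts A) h"
  have bk: "bij_betw ?k (verts B) (verts A)" using b by (rule bij_betw_the_inv_into)
  have "\<forall>u\<in>verts B. \<forall>v\<in>verts B. (u, v) \<in> arcs B \<longleftrightarrow> (?k u, ?k v) \<in> arcs A"
  proof (intro ballI)
    fix u v assume uv: "u \<in> verts B" "v \<in> verts B"
    have ku: "?k u \<in> verts A" "?k v \<in> verts A" using bk uv by (auto simp: bij_betw_def)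
    have "h (?k u) = u" "h (?k v) = v" using b uv by (auto simp: bij_betw_def f_the_inv_into_f)
    then show "(u, v) \<in> arcs B \<longleftrightarrow> (?k u, ?k v) \<in> arcs A" using g ku unfolding graph_iso_def by metis
  qed
  then show ?thesis using bk unfolding graph_iso_def by simp
qed

lemma graph_iso_comp: "graph_iso h A B \<Longrightarrow> graph_iso k B C \<Longrightarrow> graph_iso (k \<circ> h) A C"
proof -
  assume a: "graph_iso h A B" "graph_iso k B C"
  have b: "bij_betw h (verts A) (verts B)" "bij_betw k (verts B) (verts C)" using a unfolding graph_iso_def by auto
  have "bij_betw (k \<circ> h) (verts A) (verts C)" using b by (rule bij_betw_trans)
  moreover have "\<forall>u\<in>verts A. \<forall>v\<in>verts A. (u, v) \<in> arcs A \<longleftrightarrow> ((k \<circ> h) u, (k \<circ> h) v) \<in> arcs C"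
  proof (intro ballI)
    fix u v assume uv: "u \<in> verts A" "v \<in> verts A"
    then have "h u \<in> verts B" "h v \<in> verts B" using b(1) by (auto simp: bij_betw_def)
    then show "(u, v) \<in> arcs A \<longleftrightarrow> ((k \<circ> h) u, (k \<circ> h) v) \<in> arcs C" using a uv unfolding graph_iso_def by simp
  qed
  ultimately show ?thesis unfolding graph_iso_def by simp
qed

lemma isomorphic_sym: "isomorphic A B \<Longrightarrow> isomorphic B A"
  using graph_iso_inv isomorphic_graph_iso graph_iso_isomorphic by metis

lemma isomorphic_trans: "isomorphic A B \<Longrightarrow> isomorphic B C \<Longrightarrow> isomorphic A C"
  using graph_iso_comp isomorphic_graph_iso graph_iso_isomorphic by metis

lemma iso_card: "isomorphic A B \<Longrightarrow> card (verts A) = card (verts B)"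
  unfolding isomorphic_def using bij_betw_same_card by blast

lemma iso_walk: "graph_iso h A B \<Longrightarrow> walk A p \<Longrightarrow> walk B (map h p)"
proof -
  assume g: "graph_iso h A B" and w: "walk A p"
  have b: "bij_betw h (verts A) (verts B)" using g unfolding graph_iso_def by simp
  show ?thesis unfolding walk_def
  proof (intro conjI allI impI)
    show "map h p \<noteq> []" using w unfolding walk_def by simp
    show "set (map h p) \<subseteq> verts B" using w b unfolding walk_def bij_betw_def by auto
  next
    fix i assume i: "Suc i < length (map h p)"
    then have "(p ! i, p ! Suc i) \<in> arcs A" "p ! i \<in> verts A" "p ! Suc i \<in> verts A"
      using w unfolding walk_def by auto
    then show "(map h p ! i, map h p ! Suc i) \<in> arcs B" using g i unfolding graph_iso_def by auto
  qed
qed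

lemma iso_walk_betw: "graph_iso h A B \<Longrightarrow> walk_betw A u p v \<Longrightarrow> walk_betw B (h u) (map h p) (h v)"
  unfolding walk_betw_def using iso_walk
  by (metis hd_map last_map walk_def)

lemma induced_hc_arcs: "(x, y) \<in> arcs (induced (hypercube n) T) \<longleftrightarrow>
   x \<in> T \<and> y \<in> T \<and> x \<subseteq> {0..<n} \<and> y \<subseteq> {0..<n} \<and> card (sd x y) = 1"
  unfolding induced_def hypercube_def sd_def by auto

lemma induced_verts[simp]: "verts (induced G S) = S"
  unfolding induced_def by simp

lemma hc_walk_ham: "T \<subseteq> Pow {0..<n} \<Longrightarrow> walk (induced (hypercube n) T) p \<Longrightarrow>
   card (sd (hd p) (last p)) \<le> length p - 1"
proof (induction p rule: induct_list012)
  case 1 then show ?case unfolding walk_def by simp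
next
  case (2 x) then show ?case by (simp add: sd_def)
next
  case (3 x y zs)
  have w: "walk (induced (hypercube n) T) (y # zs)" and a: "(x, y) \<in> arcs (induced (hypercube n) T)"
    using 3(4) by (auto simp: walk_Cons_Cons)
  have ih: "card (sd y (last (y # zs))) \<le> length zs" using 3(2)[OF 3(3) w] by simp
  have xy: "card (sd x y) = 1" using a by (simp add: induced_hc_arcs)
  have ls: "last (y # zs) \<in> set (y # zs)" by simp
  then have "last (y # zs) \<in> T" using w unfolding walk_def by auto
  then have fl: "finite (last (y # zs))" using 3(3) by (meson PowD finite_atLeastLessThan finite_subset subsetD)
  have fx: "finite x" "finite y" "finite (last (y # zs))" using a fl
    by (auto simp: induced_hc_arcs intro: finite_subset)
  have "card (sd x (last (y # zs))) \<le> card (sd x y) + card (sd y (last (y # zs)))"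
    by (rule sd_tri[OF fx])
  then show ?case using ih xy by simp
qed

lemma hc_iso:
  assumes T: "T \<subseteq> Pow {0..<n}" and T': "T' \<subseteq> Pow {0..<n'}"
    and b: "bij_betw h T T'"
    and d: "\<And>x y. x \<in> T \<Longrightarrow> y \<in> T \<Longrightarrow> card (sd (h x) (h y)) = card (sd x y)"
  shows "graph_iso h (induced (hypercube n) T) (induced (hypercube n') T')"
  unfolding graph_iso_def
proof (intro conjI ballI)
  show "bij_betw h (verts (induced (hypercube n) T)) (verts (induced (hypercube n') T'))" using b by simp
next
  fix u v assume "u \<in> verts (induced (hypercube n) T)" "v \<in> verts (induced (hypercube n) T)"
  then have uv: "u \<in> T" "v \<in> T" by auto
  then have "h u \<in> T'" "h v \<in> T'" using b by (auto simp: bij_betw_def)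
  then show "(u, v) \<in> arcs (induced (hypercube n) T) \<longleftrightarrow> (h u, h v) \<in> arcs (induced (hypercube n') T')"
    using uv T T' d[OF uv] by (auto simp: induced_hc_arcs)
qed

lemma sd_compl: "x \<subseteq> F \<Longrightarrow> y \<subseteq> F \<Longrightarrow> sd (F - x) (F - y) = sd x y"
  unfolding sd_def by auto

lemma sd_image: "inj_on \<pi> (x \<union> y) \<Longrightarrow> sd (\<pi> ` x) (\<pi> ` y) = \<pi> ` (sd x y)"
  unfolding sd_def inj_on_def by auto

lemma card_sd_image: "inj_on \<pi> A \<Longrightarrow> x \<subseteq> A \<Longrightarrow> y \<subseteq> A \<Longrightarrow> card (sd (\<pi> ` x) (\<pi> ` y)) = card (sd x y)"
proof -
  assume "inj_on \<pi> A" "x \<subseteq> A" "y \<subseteq> A"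
  then have i: "inj_on \<pi> (x \<union> y)" by (meson inj_on_subset le_sup_iff)
  then have "inj_on \<pi> (sd x y)" by (rule inj_on_subset) (auto simp: sd_def)
  then show ?thesis using sd_image[OF i] by (simp add: card_image)
qed


lemma sd_assoc: "sd (sd A B) C = sd A (sd B C)" unfolding sd_def by auto
lemma sd_comm: "sd A B = sd B A" unfolding sd_def by auto
lemma sd_self[simp]: "sd A A = {}" unfolding sd_def by auto
lemma sd_empty[simp]: "sd A {} = A" "sd {} A = A" unfolding sd_def by auto
lemma sd_cancel: "sd (sd D A) (sd D B) = sd A B" unfolding sd_def by auto
lemma sd_cancel2: "sd (sd D A) D = A" unfolding sd_def by auto
lemma sd_cancel3[simp]: "sd D (sd D A) = A" unfolding sd_def by auto
lemma sd_eq_iff: "sd Y D = S \<longleftrightarrow> Y = sd D S" unfolding sd_def by auto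
lemma sd_finite: "finite A \<Longrightarrow> finite B \<Longrightarrow> finite (sd A B)" unfolding sd_def by auto

lemma gen_gdist1_arc: "connected_graph G \<Longrightarrow> u \<in> verts G \<Longrightarrow> v \<in> verts G \<Longrightarrow> gdist G u v = 1 \<Longrightarrow> (u, v) \<in> arcs G"
proof -
  assume c: "connected_graph G" and uv: "u \<in> verts G" "v \<in> verts G" "gdist G u v = 1"
  then obtain p where p: "walk_betw G u p v" "length p = 2" using gdist_walk[OF c, of u v] by auto
  then obtain a b where "p = [a, b]" by (metis (no_types, lifting) One_nat_def Suc_1 length_0_conv length_Suc_conv)
  then show ?thesis using p unfolding walk_betw_def by (auto simp add: walk_Cons_Cons)
qed

lemma rel_lemma:
  assumes P: "card P = 2" and Q: "card Q = 2" and PQ: "card (sd P Q) = 2"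
    and Ys: "card Ys = 1" and YP: "card (sd Ys P) = 1" and YQ: "card (sd Ys Q) \<noteq> 1"
    and Zs: "card Zs = 1" and ZQ: "card (sd Zs Q) = 1" and ZP: "card (sd Zs P) \<noteq> 1"
  shows "sd P Ys = sd Q Zs \<and> card (sd P Ys) = 1"
proof -
  obtain s where s: "Ys = {s}" using Ys card_1_singletonE by blast
  obtain t where t: "Zs = {t}" using Zs card_1_singletonE by blast
  have sP: "s \<in> P"
  proof (rule ccontr)
    assume "s \<notin> P"
    then have "sd Ys P = insert s P" using s unfolding sd_def by auto
    moreover have "finite P" using P card.infinite by fastforce
    ultimately show False using YP \<open>s \<notin> P\<close> P by simp
  qed
  have sQ: "s \<notin> Q"
  proof
    assume "s \<in> Q"
    then have "sd Ys Q = Q - {s}" using s unfolding sd_def by auto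
    then show False using YQ \<open>s \<in> Q\<close> Q by simp
  qed
  have tQ: "t \<in> Q"
  proof (rule ccontr)
    assume "t \<notin> Q"
    then have "sd Zs Q = insert t Q" using t unfolding sd_def by auto
    moreover have "finite Q" using Q card.infinite by fastforce
    ultimately show False using ZQ \<open>t \<notin> Q\<close> Q by simp
  qed
  have tP: "t \<notin> P"
  proof
    assume "t \<in> P"
    then have "sd Zs P = P - {t}" using t unfolding sd_def by auto
    then show False using ZP \<open>t \<in> P\<close> P by simp
  qed
  have fP: "finite P" using P card.infinite by fastforce
  have fQ: "finite Q" using Q card.infinite by fastforce
  have "card (P - {s}) = 1" using P sP fP by simp
  then obtain p where p: "P - {s} = {p}" using card_1_singletonE by blast
  then have pp: "P = {s, p}" "s \<noteq> p" using sP by auto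
  have "card (Q - {t}) = 1" using Q tQ fQ by simp
  then obtain q where q: "Q - {t} = {q}" using card_1_singletonE by blast
  then have qq: "Q = {t, q}" "t \<noteq> q" using tQ by auto
  have "p = q"
  proof (rule ccontr)
    assume "p \<noteq> q"
    have "s \<noteq> t" using sQ tQ by blast
    have "s \<noteq> q" using sQ qq by blast
    have "t \<noteq> p" using tP pp by blast
    then have "sd P Q = {s, p, t, q}" using pp qq \<open>s \<noteq> t\<close> \<open>s \<noteq> q\<close> \<open>p \<noteq> q\<close> unfolding sd_def by auto
    moreover have "card {s, p, t, q} = 4" using pp qq \<open>s \<noteq> t\<close> \<open>s \<noteq> q\<close> \<open>p \<noteq> q\<close> \<open>t \<noteq> p\<close> by simp
    ultimately show False using PQ by simp
  qed
  have "sd P Ys = {p}" using pp s unfolding sd_def by auto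
  moreover have "sd Q Zs = {q}" using qq t unfolding sd_def by auto
  ultimately show ?thesis using \<open>p = q\<close> by simp
qed

lemma abs_lemma:
  assumes "card (sd Di Dj) = 2" "card (sd Di Dk) = 2" "card (sd Dj Dk) = 2"
    "card (sd Y Di) = 1" "card (sd Y Dj) = 1" "card (sd Y Dk) \<noteq> 1"
    "card (sd Z Di) = 1" "card (sd Z Dk) = 1" "card (sd Z Dj) \<noteq> 1"
  shows "sd (sd Di Dj) Y = sd (sd Di Dk) Z \<and> card (sd (sd (sd Di Dj) Y) Di) = 1"
proof -
  define P where "P = sd Di Dj"
  define Q where "Q = sd Di Dk"
  define Ys where "Ys = sd Di Y"
  define Zs where "Zs = sd Di Z"
  have Dj: "Dj = sd Di P" and Dk: "Dk = sd Di Q" and Y: "Y = sd Di Ys" and Z: "Z = sd Di Zs"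
    unfolding P_def Q_def Ys_def Zs_def sd_def by auto
  have r: "sd P Ys = sd Q Zs \<and> card (sd P Ys) = 1"
  proof (rule rel_lemma)
    show "card P = 2" using assms(1) P_def by simp
    show "card Q = 2" using assms(2) Q_def by simp
    show "card (sd P Q) = 2" using assms(3) Dj Dk sd_cancel by metis
    show "card Ys = 1" using assms(4) Y by (simp add: sd_comm sd_cancel2)
    show "card (sd Ys P) = 1" using assms(5) Y Dj sd_cancel by metis
    show "card (sd Ys Q) \<noteq> 1" using assms(6) Y Dk sd_cancel by metis
    show "card Zs = 1" using assms(7) Z by (simp add: sd_comm sd_cancel2)
    show "card (sd Zs Q) = 1" using assms(8) Z Dk sd_cancel by metis
    show "card (sd Zs P) \<noteq> 1" using assms(9) Z Dj sd_cancel by metis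
  qed
  have e1: "sd (sd Di Dj) Y = sd Di (sd P Ys)" unfolding P_def Y sd_def by auto
  have e2: "sd (sd Di Dk) Z = sd Di (sd Q Zs)" unfolding Q_def Z sd_def by auto
  have e3: "sd (sd (sd Di Dj) Y) Di = sd P Ys" unfolding e1 by (simp add: sd_comm[of _ Di])
  show ?thesis using r e1 e2 e3 by metis
qed


lemma fsK_Inl: "Inl i \<in> verts (full_subdiv_K m) \<longleftrightarrow> i < m"
  unfolding full_subdiv_K_def by auto

lemma fsK_Inr: "i < m \<Longrightarrow> j < m \<Longrightarrow> i \<noteq> j \<Longrightarrow> Inr {i, j} \<in> verts (full_subdiv_K m)"
  unfolding full_subdiv_K_def by auto

lemma fsK_arc: "i < m \<Longrightarrow> j < m \<Longrightarrow> i \<noteq> j \<Longrightarrow>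
   (Inl i, Inr {i, j}) \<in> arcs (full_subdiv_K m) \<and> (Inr {i, j}, Inl i) \<in> arcs (full_subdiv_K m)"
  unfolding full_subdiv_K_def by auto

lemma fsK_noarc_ll: "(Inl i, Inl j) \<notin> arcs (full_subdiv_K m)"
  unfolding full_subdiv_K_def by auto

lemma fsK_noarc_rl: "(Inr {i, j}, Inl k) \<in> arcs (full_subdiv_K m) \<Longrightarrow> k = i \<or> k = j"
  unfolding full_subdiv_K_def by auto

lemma third: "3 \<le> m \<Longrightarrow> \<exists>k<m. k \<noteq> i \<and> k \<noteq> (j::nat)"
proof -
  assume m: "3 \<le> m"
  have "\<exists>k\<in>{0,1,2}. k \<noteq> i \<and> k \<noteq> j" by auto
  then obtain k where k: "k \<in> {0,1,2}" "k \<noteq> i" "k \<noteq> j" by blast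
  then have "k < m" using m by auto
  then show ?thesis using k by blast
qed

locale sub = pc G f for G :: "'a graph" and f +
  fixes H :: "'a graph" and m :: nat and \<phi> :: "nat + nat set \<Rightarrow> 'a"
  assumes iso: "graph_iso \<phi> (full_subdiv_K m) H" and isoH: "isometric_subgraph H G" and m3: "3 \<le> m"
begin

definition x where "x i = \<phi> (Inl i)"
definition y where "y i j = \<phi> (Inr {i, j})"

lemma y_sym: "y i j = y j i" unfolding y_def by (simp add: insert_commute)

lemma subHG: "verts H \<subseteq> verts G" "arcs H \<subseteq> arcs G"
  using isoH unfolding isometric_subgraph_def subgraph_def by auto

lemma connH: "connected_graph H" using isoH unfolding isometric_subgraph_def by simp

lemma xH: "i < m \<Longrightarrow> x i \<in> verts H"
  using iso fsK_Inl unfolding graph_iso_def bij_betw_def x_def by blast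

lemma yH: "i < m \<Longrightarrow> j < m \<Longrightarrow> i \<noteq> j \<Longrightarrow> y i j \<in> verts H"
  using iso fsK_Inr unfolding graph_iso_def bij_betw_def y_def by blast

lemma xG: "i < m \<Longrightarrow> x i \<in> verts G" using xH subHG by blast
lemma yG: "i < m \<Longrightarrow> j < m \<Longrightarrow> i \<noteq> j \<Longrightarrow> y i j \<in> verts G" using yH subHG by blast

lemma x_inj: "i < m \<Longrightarrow> j < m \<Longrightarrow> x i = x j \<Longrightarrow> i = j"
  using iso fsK_Inl unfolding graph_iso_def bij_betw_def inj_on_def x_def by blast

lemma arc_xy: "i < m \<Longrightarrow> j < m \<Longrightarrow> i \<noteq> j \<Longrightarrow> (x i, y i j) \<in> arcs G \<and> (y i j, x i) \<in> arcs G"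
proof -
  assume a: "i < m" "j < m" "i \<noteq> j"
  have "(\<phi> (Inl i), \<phi> (Inr {i,j})) \<in> arcs H \<and> (\<phi> (Inr {i,j}), \<phi> (Inl i)) \<in> arcs H"
    using iso fsK_arc[OF a] fsK_Inl fsK_Inr[OF a] a unfolding graph_iso_def by blast
  then show ?thesis using subHG unfolding x_def y_def by blast
qed

lemma G_arc_H: "u \<in> verts H \<Longrightarrow> v \<in> verts H \<Longrightarrow> (u, v) \<in> arcs G \<Longrightarrow> (u, v) \<in> arcs H"
proof -
  assume uv: "u \<in> verts H" "v \<in> verts H" "(u, v) \<in> arcs G"
  have "gdist G u v = 1" using arc_gdist uv(3) by simp
  then have "gdist H u v = 1" using isoH uv unfolding isometric_subgraph_def by simp
  then show ?thesis using gen_gdist1_arc[OF connH uv(1,2)] by simp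
qed

lemma ham_xx: "i < m \<Longrightarrow> j < m \<Longrightarrow> i \<noteq> j \<Longrightarrow> card (sd (f (x i)) (f (x j))) = 2"
proof -
  assume a: "i < m" "j < m" "i \<noteq> j"
  have w: "walk_betw G (x i) [x i, y i j, x j] (x j)"
    using arc_xy[OF a] arc_xy[of j i] a xG yG y_sym unfolding walk_betw_def
    by (auto simp: walk_Cons_Cons walk_single)
  have le: "card (sd (f (x i)) (f (x j))) \<le> 2" using walk_ham[OF w] by simp
  have "x i \<noteq> x j" using x_inj a by blast
  then have n0: "card (sd (f (x i)) (f (x j))) \<noteq> 0"
    using sd_0 fin xG a f_inj unfolding inj_on_def by metis
  have n1: "card (sd (f (x i)) (f (x j))) \<noteq> 1"
  proof
    assume "card (sd (f (x i)) (f (x j))) = 1"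
    then have "(x i, x j) \<in> arcs G" using arc_iff xG a by blast
    then have "(x i, x j) \<in> arcs H" using G_arc_H xH a by blast
    then have "(Inl i, Inl j) \<in> arcs (full_subdiv_K m)"
      using iso fsK_Inl a unfolding graph_iso_def x_def by blast
    then show False using fsK_noarc_ll by blast
  qed
  show ?thesis using le n0 n1 by linarith
qed

lemma ham_yx: "i < m \<Longrightarrow> j < m \<Longrightarrow> i \<noteq> j \<Longrightarrow> card (sd (f (y i j)) (f (x i))) = 1"
  using arc_xy arc_iff xG yG by blast

lemma ham_yx_not: "i < m \<Longrightarrow> j < m \<Longrightarrow> i \<noteq> j \<Longrightarrow> k < m \<Longrightarrow> k \<noteq> i \<Longrightarrow> k \<noteq> j \<Longrightarrow>
   card (sd (f (y i j)) (f (x k))) \<noteq> 1"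
proof
  assume a: "i < m" "j < m" "i \<noteq> j" "k < m" "k \<noteq> i" "k \<noteq> j" and c: "card (sd (f (y i j)) (f (x k))) = 1"
  then have "(y i j, x k) \<in> arcs G" using arc_iff xG yG by blast
  then have "(y i j, x k) \<in> arcs H" using G_arc_H xH yH a by blast
  then have "(Inr {i, j}, Inl k) \<in> arcs (full_subdiv_K m)"
    using iso fsK_Inl fsK_Inr a unfolding graph_iso_def x_def y_def by blast
  then show False using fsK_noarc_rl a by blast
qed

definition C where "C i j = sd (sd (f (x i)) (f (x j))) (f (y i j))"

lemma C_sym: "C i j = C j i"
  unfolding C_def using y_sym by (simp add: sd_comm)

lemma C_lemma: "i < m \<Longrightarrow> j < m \<Longrightarrow> k < m \<Longrightarrow> i \<noteq> j \<Longrightarrow> i \<noteq> k \<Longrightarrow> j \<noteq> k \<Longrightarrow>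
  C i j = C i k \<and> card (sd (C i j) (f (x i))) = 1"
proof -
  assume a: "i < m" "j < m" "k < m" "i \<noteq> j" "i \<noteq> k" "j \<noteq> k"
  have 5: "card (sd (f (y i j)) (f (x j))) = 1" using ham_yx[of j i] a y_sym by simp
  have 8: "card (sd (f (y i k)) (f (x k))) = 1" using ham_yx[of k i] a y_sym by simp
  show ?thesis unfolding C_def
    by (rule abs_lemma[OF ham_xx ham_xx ham_xx ham_yx 5 ham_yx_not ham_yx 8 ham_yx_not]) (use a in auto)
qed

lemma C_const: "i < m \<Longrightarrow> j < m \<Longrightarrow> i \<noteq> j \<Longrightarrow> C i j = C 0 1"
proof -
  assume a: "i < m" "j < m" "i \<noteq> j"
  have m1: "0 < m" "1 < m" using m3 by auto
  have c0: "C 0 j = C 0 1" if "j < m" "j \<noteq> 0" for j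
    using C_lemma[of 0 j 1] that m1 by (cases "j = 1") auto
  show ?thesis
  proof (cases "i = 0")
    case True then show ?thesis using c0[of j] a by simp
  next
    case False
    have "C i j = C i 0" using C_lemma[of i j 0] a False m1 by (cases "j = 0") auto
    also have "\<dots> = C 0 i" by (rule C_sym)
    also have "\<dots> = C 0 1" using c0[of i] a False by simp
    finally show ?thesis .
  qed
qed

definition c where "c = C 0 1"

lemma c_fin: "finite c"
  unfolding c_def C_def using fin xG yG m3 by (intro sd_finite) auto

lemma c_near: "i < m \<Longrightarrow> card (sd c (f (x i))) = 1"
proof -
  assume i: "i < m"
  obtain j where j: "j < m" "j \<noteq> i" using third[OF m3, of i i] by blast
  obtain k where k: "k < m" "k \<noteq> i" "k \<noteq> j" using third[OF m3, of i j] by blast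
  have "card (sd (C i j) (f (x i))) = 1" using C_lemma[of i j k] i j k by auto
  then show ?thesis using C_const[of i j] i j unfolding c_def by simp
qed

definition a where "a i = (THE e. sd c (f (x i)) = {e})"

lemma x_coord: "i < m \<Longrightarrow> f (x i) = sd c {a i}"
proof -
  assume i: "i < m"
  obtain e where e: "sd c (f (x i)) = {e}" using c_near[OF i] card_1_singletonE by blast
  then have "a i = e" unfolding a_def by simp
  then show ?thesis using e by (metis sd_eq_iff sd_comm)
qed

lemma a_inj: "inj_on a {0..<m}"
proof (rule inj_onI)
  fix i j assume ij: "i \<in> {0..<m}" "j \<in> {0..<m}" "a i = a j"
  then have "f (x i) = f (x j)" using x_coord by simp
  then have "x i = x j" using f_inj xG ij unfolding inj_on_def by simp
  then show "i = j" using x_inj ij by simp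
qed

lemma y_coord: "i < m \<Longrightarrow> j < m \<Longrightarrow> i \<noteq> j \<Longrightarrow> f (y i j) = sd c {a i, a j}"
proof -
  assume a: "i < m" "j < m" "i \<noteq> j"
  have aij: "a i \<noteq> a j" using a_inj a unfolding inj_on_def by auto
  have "C i j = c" using C_const[OF a] unfolding c_def .
  moreover have "C i j = sd (f (y i j)) (sd (f (x i)) (f (x j)))" unfolding C_def by (rule sd_comm)
  ultimately have "sd (f (y i j)) (sd (f (x i)) (f (x j))) = c" by simp
  then have "f (y i j) = sd (sd (f (x i)) (f (x j))) c" by (rule sd_eq_iff[THEN iffD1])
  also have "\<dots> = sd (sd (sd c {a i}) (sd c {a j})) c" using x_coord a by simp
  also have "\<dots> = sd (sd {a i} {a j}) c" by (simp only: sd_cancel)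
  also have "\<dots> = sd c {a i, a j}" using aij unfolding sd_def by auto
  finally show ?thesis .
qed

end


lemma rel_between: "A \<inter> C \<subseteq> B \<Longrightarrow> B \<subseteq> A \<union> C \<Longrightarrow> sd A D \<inter> sd C D \<subseteq> sd B D \<and> sd B D \<subseteq> sd A D \<union> sd C D"
  unfolding sd_def by auto

lemma three_center:
  assumes "card (sd Z {p}) = 1" "card (sd Z {q}) = 1" "card (sd Z {r}) = 1" "p \<noteq> q" "p \<noteq> r" "q \<noteq> r"
  shows "Z = {}"
proof -
  have fZ: "finite Z"
  proof (rule ccontr)
    assume "infinite Z"
    then have "infinite (sd Z {p})" unfolding sd_def by (metis Diff_infinite_finite finite.emptyI finite_Un finite_insert)
    then show False using assms(1) by simp
  qed
  have nin: "e \<notin> Z" if e: "card (sd Z {e}) = 1" "card (sd Z {e'}) = 1" "card (sd Z {e''}) = 1"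
    "e \<noteq> e'" "e \<noteq> e''" "e' \<noteq> e''" for e e' e''
  proof
    assume eZ: "e \<in> Z"
    then have "sd Z {e} = Z - {e}" unfolding sd_def by auto
    then have c2: "card Z = 2" using e(1) fZ eZ by (simp add: card_Diff_singleton)
    show False
    proof (cases "e' \<in> Z")
      case True
      then have Z: "Z = {e, e'}" using c2 eZ e(4) by (metis card_2_iff doubleton_eq_iff insertE insert_absorb singletonD)
      then have "sd Z {e''} = {e, e', e''}" using e unfolding sd_def by auto
      then show False using e by simp
    next
      case False
      then have "sd Z {e'} = insert e' Z" unfolding sd_def by auto
      then show False using e(2) False fZ c2 by simp
    qed
  qed
  have "p \<notin> Z" using nin[of p q r] assms by blast
  then have "sd Z {p} = insert p Z" unfolding sd_def by auto
  then have "card (insert p Z) = 1" using assms(1) by simp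
  then show ?thesis using \<open>p \<notin> Z\<close> fZ by simp
qed

context sub
begin

definition WK where "WK K = {v \<in> verts G. sd (f v) c \<subseteq> a ` K}"
definition g where "g v = {i. i < m \<and> a i \<in> sd (f v) c}"
definition VK where "VK K = x ` K \<union> {y i j | i j. i \<in> K \<and> j \<in> K \<and> i \<noteq> j}"

lemma g_coord: "K \<subseteq> {0..<m} \<Longrightarrow> v \<in> WK K \<Longrightarrow> sd (f v) c = a ` (g v) \<and> g v \<subseteq> K"
proof -
  assume K: "K \<subseteq> {0..<m}" and v: "v \<in> WK K"
  have s: "sd (f v) c \<subseteq> a ` K" using v unfolding WK_def by simp
  have "sd (f v) c = a ` (g v)"
  proof
    show "sd (f v) c \<subseteq> a ` g v"
    proof
      fix e assume e: "e \<in> sd (f v) c"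
      then obtain i where i: "i \<in> K" "e = a i" using s by auto
      then have "i < m" using K by auto
      then show "e \<in> a ` g v" using i e unfolding g_def by auto
    qed
    show "a ` g v \<subseteq> sd (f v) c" unfolding g_def by auto
  qed
  moreover have "g v \<subseteq> K" unfolding g_def using s K a_inj unfolding inj_on_def by fastforce
  ultimately show ?thesis by simp
qed

lemma a_neq: "i < m \<Longrightarrow> j < m \<Longrightarrow> i \<noteq> j \<Longrightarrow> a i \<noteq> a j"
  using a_inj unfolding inj_on_def by (metis atLeastLessThan_iff zero_le)

lemma WK_mono: "K \<subseteq> K' \<Longrightarrow> WK K \<subseteq> WK K'" unfolding WK_def by (blast dest: image_mono)

lemma ham_g: "K \<subseteq> {0..<m} \<Longrightarrow> u \<in> WK K \<Longrightarrow> v \<in> WK K \<Longrightarrow> card (sd (f u) (f v)) = card (sd (g u) (g v))"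
proof -
  assume K: "K \<subseteq> {0..<m}" and uv: "u \<in> WK K" "v \<in> WK K"
  have "sd (f u) (f v) = sd (sd c (f u)) (sd c (f v))" by (simp add: sd_cancel)
  also have "\<dots> = sd (a ` g u) (a ` g v)" using g_coord[OF K uv(1)] g_coord[OF K uv(2)] by (simp add: sd_comm)
  finally have "card (sd (f u) (f v)) = card (sd (a ` g u) (a ` g v))" by simp
  also have "\<dots> = card (sd (g u) (g v))"
    by (rule card_sd_image[OF a_inj]) (use g_coord[OF K uv(1)] g_coord[OF K uv(2)] K in auto)
  finally show ?thesis .
qed

lemma g_inj: "K \<subseteq> {0..<m} \<Longrightarrow> inj_on g (WK K)"
proof (rule inj_onI)
  fix u v assume K: "K \<subseteq> {0..<m}" and uv: "u \<in> WK K" "v \<in> WK K" "g u = g v"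
  then have "sd (f u) c = sd (f v) c" using g_coord by metis
  then have "f u = f v" by (metis sd_cancel2 sd_comm)
  then show "u = v" using f_inj uv unfolding inj_on_def WK_def by auto
qed

lemma g_sub: "g v \<subseteq> {0..<m}" unfolding g_def by auto

lemma VK_WK: "K \<subseteq> {0..<m} \<Longrightarrow> VK K \<subseteq> WK K"
proof
  fix v assume K: "K \<subseteq> {0..<m}" and v: "v \<in> VK K"
  then consider i where "i \<in> K" "v = x i" | i j where "i \<in> K" "j \<in> K" "i \<noteq> j" "v = y i j"
    unfolding VK_def by blast
  then show "v \<in> WK K"
  proof cases
    case 1
    then have im: "i < m" using K by auto
    have "sd (f (x i)) c = {a i}" using x_coord[OF im] by (simp add: sd_cancel2)
    then show ?thesis using 1 im xG unfolding WK_def by auto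
  next
    case 2
    then have im: "i < m" "j < m" using K by auto
    have "sd (f (y i j)) c = {a i, a j}" using y_coord[OF im 2(3)] by (simp add: sd_cancel2)
    then show ?thesis using 2 im yG unfolding WK_def by auto
  qed
qed

lemma WK_convex: "K \<subseteq> {0..<m} \<Longrightarrow> convex_set G (WK K)"
  unfolding convex_set_def
proof (intro conjI ballI allI impI)
  show "WK K \<subseteq> verts G" unfolding WK_def by auto
next
  fix u v p assume K: "K \<subseteq> {0..<m}" and uv: "u \<in> WK K" "v \<in> WK K"
    and p: "walk_betw G u p v \<and> length p = Suc (gdist G u v)"
  show "set p \<subseteq> WK K"
  proof
    fix w assume w: "w \<in> set p"
    then have wG: "w \<in> verts G" using p unfolding walk_betw_def walk_def by auto
    have "f u \<inter> f v \<subseteq> f w \<and> f w \<subseteq> f u \<union> f v" using geodesic_between p w by blast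
    then have "sd (f w) c \<subseteq> sd (f u) c \<union> sd (f v) c" using rel_between by blast
    then show "w \<in> WK K" using uv wG unfolding WK_def by auto
  qed
qed

end

locale sub2 = sub +
  assumes noA: "\<not> (\<exists>v\<in>verts G. \<forall>i<m. (v, x i) \<in> arcs G)"
begin

lemma not_center: "v \<in> verts G \<Longrightarrow> f v \<noteq> c"
proof
  assume v: "v \<in> verts G" and fc: "f v = c"
  have "\<forall>i<m. (v, x i) \<in> arcs G"
  proof (intro allI impI)
    fix i assume i: "i < m"
    have "card (sd (f v) (f (x i))) = 1" using fc x_coord[OF i] by simp
    then show "(v, x i) \<in> arcs G" using arc_iff v xG i by blast
  qed
  then show False using noA v by blast
qed

lemma no_common_nbr: "v \<in> verts G \<Longrightarrow> i < m \<Longrightarrow> j < m \<Longrightarrow> k < m \<Longrightarrow> i \<noteq> j \<Longrightarrow> i \<noteq> k \<Longrightarrow> j \<noteq> k \<Longrightarrow>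
  (v, x i) \<in> arcs G \<Longrightarrow> (v, x j) \<in> arcs G \<Longrightarrow> (v, x k) \<in> arcs G \<Longrightarrow> False"
proof -
  assume v: "v \<in> verts G" and ijk: "i < m" "j < m" "k < m" "i \<noteq> j" "i \<noteq> k" "j \<noteq> k"
    and arcs: "(v, x i) \<in> arcs G" "(v, x j) \<in> arcs G" "(v, x k) \<in> arcs G"
  have h: "card (sd (sd (f v) c) {a l}) = 1" if "l < m" "(v, x l) \<in> arcs G" for l
  proof -
    have "card (sd (f v) (f (x l))) = 1" using arc_iff that v xG by blast
    moreover have "sd (f v) (f (x l)) = sd (sd (f v) c) {a l}" using x_coord[OF that(1)] by (simp add: sd_assoc)
    ultimately show ?thesis by simp
  qed
  have an: "a i \<noteq> a j" "a i \<noteq> a k" "a j \<noteq> a k" using a_neq ijk by auto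
  have "sd (f v) c = {}" by (rule three_center[OF h[OF ijk(1) arcs(1)] h[OF ijk(2) arcs(2)] h[OF ijk(3) arcs(3)] an])
  then have "f v = c" by (metis sd_eq_iff sd_empty(1))
  then show False using not_center v by blast
qed

lemma step:
  assumes K: "K \<subseteq> {0..<m}" and w: "w \<in> WK K" and e: "e \<in> sd (f w) c" and cz: "2 \<le> card (sd (f w) c)"
  shows "\<exists>b\<in>sd (f w) c. b \<noteq> e \<and> (\<exists>z\<in>verts G. (w, z) \<in> arcs G \<and> sd (f z) c = sd (f w) c - {b})"
proof -
  let ?Z = "sd (f w) c"
  have wG: "w \<in> verts G" using w unfolding WK_def by simp
  obtain i where i: "i \<in> K" "e = a i" using e w unfolding WK_def by auto
  have im: "i < m" using i K by auto
  have fZ: "finite ?Z" using fin[OF wG] c_fin by (rule sd_finite)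
  obtain p where p: "walk_betw G w p (x i)" "length p = Suc (gdist G w (x i))"
    using gdist_walk[OF conn wG xG[OF im]] by blast
  have "sd (f w) (f (x i)) = sd ?Z {a i}" using x_coord[OF im] by (simp add: sd_assoc)
  moreover have "sd ?Z {a i} = ?Z - {a i}" using e i unfolding sd_def by auto
  moreover have "card (?Z - {a i}) = card ?Z - 1" using e i fZ by (simp add: card_Diff_singleton)
  ultimately have gd: "gdist G w (x i) = card ?Z - 1" using ham wG xG im by simp
  then have lp: "length p \<ge> 2" using p cz by simp
  define z where "z = p ! 1"
  have pw: "walk G p" "hd p = w" using p unfolding walk_betw_def by auto
  have "p \<noteq> []" using lp by auto
  then have "p ! 0 = w" using pw(2) by (simp add: hd_conv_nth)
  then have arc: "(w, z) \<in> arcs G" using pw lp unfolding walk_def z_def by (metis One_nat_def Suc_1 Suc_le_lessD)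
  have zs: "z \<in> set p" using lp unfolding z_def by simp
  then have zG: "z \<in> verts G" using pw unfolding walk_def by auto
  have bt: "f w \<inter> f (x i) \<subseteq> f z \<and> f z \<subseteq> f w \<union> f (x i)" using geodesic_between[OF p zs] .
  have bt2: "sd (f w) c \<inter> {a i} \<subseteq> sd (f z) c \<and> sd (f z) c \<subseteq> sd (f w) c \<union> {a i}"
    using rel_between[of "f w" "f (x i)" "f z" c] bt x_coord[OF im] by (simp add: sd_cancel2)
  have sub: "sd (f z) c \<subseteq> ?Z" and ai: "a i \<in> sd (f z) c" using bt2 e i by auto
  have "card (sd (f w) (f z)) = 1" using arc arc_iff wG zG by blast
  moreover have "sd (f w) (f z) = sd ?Z (sd (f z) c)" by (metis sd_cancel sd_comm)
  ultimately have c1: "card (sd ?Z (sd (f z) c)) = 1" by simp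
  then obtain b where b: "sd ?Z (sd (f z) c) = {b}" using card_1_singletonE by blast
  then have bZ: "b \<in> ?Z" "sd (f z) c = ?Z - {b}" using sub unfolding sd_def by auto
  then have "b \<noteq> e" using ai i by auto
  then show ?thesis using bZ zG arc by blast
qed

lemma hull_contains:
  assumes K: "K \<subseteq> {0..<m}" and S: "convex_set G S" "VK K \<subseteq> S"
  shows "WK K \<subseteq> S"
proof -
  have "\<forall>w. w \<in> WK K \<and> card (sd (f w) c) = n \<longrightarrow> w \<in> S" for n
  proof (induction n rule: less_induct)
    case (less n)
    show ?case
    proof (intro allI impI)
      fix w assume w: "w \<in> WK K \<and> card (sd (f w) c) = n"
      let ?Z = "sd (f w) c"
      have wG: "w \<in> verts G" using w unfolding WK_def by simp
      have fZ: "finite ?Z" using fin[OF wG] c_fin by (rule sd_finite)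
      have Z0: "?Z \<noteq> {}" using not_center[OF wG] by (metis sd_eq_iff sd_empty(1))
      have ZK: "?Z \<subseteq> a ` K" using w unfolding WK_def by simp
      consider "n = 1" | "n = 2" | "n \<ge> 3" using Z0 fZ w by (metis card_0_eq less_one linorder_not_less nat_less_le numeral_2_eq_2 numeral_3_eq_3 One_nat_def not_less_eq_eq)
      then show "w \<in> S"
      proof cases
        case 1
        then obtain e where e: "?Z = {e}" using w card_1_singletonE by blast
        then obtain i where i: "i \<in> K" "e = a i" using ZK by auto
        have "f w = f (x i)" using e i x_coord[of i] K by (metis atLeastLessThan_iff sd_eq_iff subsetD sd_comm)
        have im: "i < m" using i K by auto
        then have "w = x i" using inj_onD[OF f_inj _ wG xG[OF im]] \<open>f w = f (x i)\<close> by auto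
        then show ?thesis using S i unfolding VK_def by auto
      next
        case 2
        then obtain e1 e2 where e: "?Z = {e1, e2}" "e1 \<noteq> e2" using w card_2_iff by metis
        then obtain i j where i: "i \<in> K" "e1 = a i" "j \<in> K" "e2 = a j" using ZK by auto
        have ij: "i \<noteq> j" using e i by auto
        have "f w = f (y i j)" using e i y_coord[of i j] K ij by (metis atLeastLessThan_iff sd_eq_iff subsetD sd_comm)
        have im: "i < m" "j < m" using i K by auto
        then have "w = y i j" using inj_onD[OF f_inj _ wG yG[OF im ij]] \<open>f w = f (y i j)\<close> by auto
        then show ?thesis using S i ij unfolding VK_def by auto
      next
        case 3
        obtain e0 where e0: "e0 \<in> ?Z" using Z0 by blast
        obtain b z where b: "b \<in> ?Z" "b \<noteq> e0" and z: "z \<in> verts G" "(w, z) \<in> arcs G" "sd (f z) c = ?Z - {b}"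
          using step[OF K _ e0] w 3 by fastforce
        obtain b' z' where b': "b' \<in> ?Z" "b' \<noteq> b" and z': "z' \<in> verts G" "(w, z') \<in> arcs G" "sd (f z') c = ?Z - {b'}"
          using step[OF K _ b(1)] w 3 by fastforce
        have "?Z - {b} \<subseteq> a ` K" "?Z - {b'} \<subseteq> a ` K" using ZK by blast+
        then have zW: "z \<in> WK K" "z' \<in> WK K" using z(1,3) z'(1,3) unfolding WK_def by simp_all
        have cz: "card (sd (f z) c) < n" "card (sd (f z') c) < n"
          using card_Diff1_less[OF fZ b(1)] card_Diff1_less[OF fZ b'(1)] z(3) z'(3) w by simp_all
        have zS: "z \<in> S" "z' \<in> S" using less.IH[OF cz(1)] less.IH[OF cz(2)] zW by auto
        have "sd (f z) (f z') = sd (?Z - {b}) (?Z - {b'})" using z(3) z'(3) by (metis sd_cancel sd_comm)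
        also have "\<dots> = {b, b'}" using b b' unfolding sd_def by auto
        finally have "card (sd (f z) (f z')) = 2" using b' by simp
        then have gd: "gdist G z z' = 2" using ham z(1) z'(1) by simp
        have wzz: "(z, w) \<in> arcs G" using z(2) graphG unfolding graph_def by blast
        have "walk_betw G z [z, w, z'] z'" unfolding walk_betw_def
          using wzz z'(1,2) z(1) wG by (simp add: walk_Cons_Cons walk_single)
        then have "set [z, w, z'] \<subseteq> S" using S(1) zS gd unfolding convex_set_def by fastforce
        then show ?thesis by simp
      qed
    qed
  qed
  then show ?thesis by blast
qed

lemma conv_WK:
  assumes K: "K \<subseteq> {0..<m}" and HK: "verts HK = VK K"
  shows "conv G HK = induced G (WK K)"
proof -
  have "\<Inter>{S. convex_set G S \<and> verts HK \<subseteq> S} = WK K"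
  proof
    show "\<Inter>{S. convex_set G S \<and> verts HK \<subseteq> S} \<subseteq> WK K"
      using WK_convex[OF K] VK_WK[OF K] HK by blast
    show "WK K \<subseteq> \<Inter>{S. convex_set G S \<and> verts HK \<subseteq> S}"
      using hull_contains[OF K] HK by blast
  qed
  then show ?thesis unfolding conv_def by simp
qed

end


lemma walk_append: "walk G p \<Longrightarrow> walk G q \<Longrightarrow> last p = hd q \<Longrightarrow> walk G (p @ tl q)"
proof (induction p rule: induct_list012)
  case 1 then show ?case unfolding walk_def by simp
next
  case (2 x)
  then show ?case by (cases q) auto
next
  case (3 x y zs)
  have "walk G (y # zs)" "x \<in> verts G" "(x, y) \<in> arcs G" using 3(3) by (auto simp: walk_Cons_Cons)
  then have "walk G ((y # zs) @ tl q)" using 3 by simp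
  then show ?case using \<open>x \<in> verts G\<close> \<open>(x, y) \<in> arcs G\<close> by (simp add: walk_Cons_Cons)
qed

lemma walk_betw_append: "walk_betw G u p v \<Longrightarrow> walk_betw G v q w \<Longrightarrow>
   walk_betw G u (p @ tl q) w \<and> length (p @ tl q) = length p + length q - 1"
  unfolding walk_betw_def
proof (intro conjI)
  assume a: "walk G p \<and> hd p = u \<and> last p = v" "walk G q \<and> hd q = v \<and> last q = w"
  have pq: "p \<noteq> []" "q \<noteq> []" using a unfolding walk_def by auto
  show "walk G (p @ tl q)" by (rule walk_append) (use a in auto)
  show "hd (p @ tl q) = u" using a pq by simp
  show "last (p @ tl q) = w" using a pq by (cases q) (auto simp: last_append)
  show "length (p @ tl q) = length p + length q - 1" using pq by (cases q) auto
qed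

lemma walk_rev: "graph G \<Longrightarrow> walk G p \<Longrightarrow> walk G (rev p)"
proof (induction p rule: induct_list012)
  case 1 then show ?case by simp
next
  case (2 x) then show ?case by simp
next
  case (3 x y zs)
  have "walk G (y # zs)" "x \<in> verts G" "(x, y) \<in> arcs G" using 3(4) by (auto simp: walk_Cons_Cons)
  then have w: "walk G (rev (y # zs))" using 3 by simp
  have "(y, x) \<in> arcs G" using \<open>(x, y) \<in> arcs G\<close> 3(3) unfolding graph_def by blast
  then show ?case using walk_snoc[OF w, of x] \<open>x \<in> verts G\<close> by simp
qed

lemma walk_betw_rev: "graph G \<Longrightarrow> walk_betw G u p v \<Longrightarrow> walk_betw G v (rev p) u"
  unfolding walk_betw_def using walk_rev
  by (metis hd_rev last_rev)

lemma graph_induced: "graph G \<Longrightarrow> graph (induced G S)"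
  unfolding graph_def induced_def by auto

lemma fsK_arcs_iff: "u \<in> verts (full_subdiv_K n) \<Longrightarrow> v \<in> verts (full_subdiv_K n) \<Longrightarrow>
  (u, v) \<in> arcs (full_subdiv_K n) \<longleftrightarrow> (\<exists>i e. (u = Inl i \<and> v = Inr e \<or> u = Inr e \<and> v = Inl i) \<and> i \<in> e)"
  unfolding full_subdiv_K_def by auto

definition VfK :: "nat set \<Rightarrow> (nat + nat set) set" where
  "VfK K = Inl ` K \<union> Inr ` {{i, j} | i j. i \<in> K \<and> j \<in> K \<and> i \<noteq> j}"

lemma fsK_verts: "verts (full_subdiv_K n) = VfK {0..<n}"
  unfolding full_subdiv_K_def VfK_def by auto

lemma lift_bij:
  assumes s: "bij_betw \<sigma> {0..<k} K"
  shows "bij_betw (map_sum \<sigma> ((`) \<sigma>)) (VfK {0..<k}) (VfK K)"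
proof -
  have inj: "inj_on \<sigma> {0..<k}" and im: "\<sigma> ` {0..<k} = K" using s unfolding bij_betw_def by auto
  show ?thesis unfolding bij_betw_def
  proof
    show "inj_on (map_sum \<sigma> ((`) \<sigma>)) (VfK {0..<k})"
    proof (rule inj_onI)
      fix u v assume u: "u \<in> VfK {0..<k}" and v: "v \<in> VfK {0..<k}" and e: "map_sum \<sigma> ((`) \<sigma>) u = map_sum \<sigma> ((`) \<sigma>) v"
      show "u = v"
      proof (cases u)
        case (Inl i)
        then obtain j where "v = Inl j" using e by (cases v) auto
        then show ?thesis using Inl e u v inj unfolding VfK_def inj_on_def by auto
      next
        case (Inr eu)
        then obtain ev where ev: "v = Inr ev" using e by (cases v) auto
        have "eu \<subseteq> {0..<k}" "ev \<subseteq> {0..<k}" using u v Inr ev unfolding VfK_def by auto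
        moreover have "\<sigma> ` eu = \<sigma> ` ev" using e Inr ev by simp
        ultimately have "eu = ev" using inj by (meson inj_on_image_eq_iff)
        then show ?thesis using Inr ev by simp
      qed
    qed
    show "map_sum \<sigma> ((`) \<sigma>) ` VfK {0..<k} = VfK K"
    proof
      show "map_sum \<sigma> ((`) \<sigma>) ` VfK {0..<k} \<subseteq> VfK K"
      proof
        fix w assume "w \<in> map_sum \<sigma> ((`) \<sigma>) ` VfK {0..<k}"
        then obtain u where u: "u \<in> VfK {0..<k}" "w = map_sum \<sigma> ((`) \<sigma>) u" by blast
        then consider i where "i < k" "u = Inl i" | i j where "i < k" "j < k" "i \<noteq> j" "u = Inr {i, j}"
          unfolding VfK_def by auto
        then show "w \<in> VfK K"
        proof cases
          case 1 then show ?thesis using u im unfolding VfK_def by auto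
        next
          case 2
          then have ne: "\<sigma> i \<noteq> \<sigma> j" using inj unfolding inj_on_def by auto
          have wi: "w = Inr {\<sigma> i, \<sigma> j}" using u 2 by simp
          have "\<sigma> i \<in> K" "\<sigma> j \<in> K" using im 2 by auto
          then show ?thesis using wi ne unfolding VfK_def by blast
        qed
      qed
      show "VfK K \<subseteq> map_sum \<sigma> ((`) \<sigma>) ` VfK {0..<k}"
      proof
        fix w assume "w \<in> VfK K"
        then consider i where "i \<in> K" "w = Inl i" | i j where "i \<in> K" "j \<in> K" "i \<noteq> j" "w = Inr {i, j}"
          unfolding VfK_def by auto
        then show "w \<in> map_sum \<sigma> ((`) \<sigma>) ` VfK {0..<k}"
        proof cases
          case 1
          then obtain i' where "i' < k" "\<sigma> i' = i" using im by force
          then have "Inl i' \<in> VfK {0..<k}" "map_sum \<sigma> ((`) \<sigma>) (Inl i') = w" using 1 unfolding VfK_def by auto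
          then show ?thesis by (metis image_eqI)
        next
          case 2
          obtain i' where i': "i' < k" "\<sigma> i' = i" using im 2 by force
          obtain j' where j': "j' < k" "\<sigma> j' = j" using im 2 by force
          have "i' \<noteq> j'" using i' j' 2 by auto
          then have "Inr {i', j'} \<in> VfK {0..<k}" "map_sum \<sigma> ((`) \<sigma>) (Inr {i', j'}) = w"
            using 2 i' j' unfolding VfK_def by auto
          then show ?thesis by (metis image_eqI)
        qed
      qed
    qed
  qed
qed

lemma VfK_mono: "K \<subseteq> K' \<Longrightarrow> VfK K \<subseteq> VfK K'" unfolding VfK_def by blast

lemma lift_arcs:
  assumes s: "bij_betw \<sigma> {0..<k} K" and K: "K \<subseteq> {0..<n}"
    and u: "u \<in> verts (full_subdiv_K k)" and v: "v \<in> verts (full_subdiv_K k)"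
  shows "(u, v) \<in> arcs (full_subdiv_K k) \<longleftrightarrow>
    (map_sum \<sigma> ((`) \<sigma>) u, map_sum \<sigma> ((`) \<sigma>) v) \<in> arcs (full_subdiv_K n)"
proof -
  have inj: "inj_on \<sigma> {0..<k}" using s unfolding bij_betw_def by auto
  have b: "bij_betw (map_sum \<sigma> ((`) \<sigma>)) (VfK {0..<k}) (VfK K)" by (rule lift_bij[OF s])
  have Lu: "map_sum \<sigma> ((`) \<sigma>) u \<in> verts (full_subdiv_K n)" "map_sum \<sigma> ((`) \<sigma>) v \<in> verts (full_subdiv_K n)"
    using b u v VfK_mono[OF K] unfolding fsK_verts bij_betw_def by auto
  have key: "(\<exists>i e. (u = Inl i \<and> v = Inr e \<or> u = Inr e \<and> v = Inl i) \<and> i \<in> e) \<longleftrightarrow>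
    (\<exists>i e. (map_sum \<sigma> ((`) \<sigma>) u = Inl i \<and> map_sum \<sigma> ((`) \<sigma>) v = Inr e \<or>
            map_sum \<sigma> ((`) \<sigma>) u = Inr e \<and> map_sum \<sigma> ((`) \<sigma>) v = Inl i) \<and> i \<in> e)"
  proof (cases u; cases v)
    fix i j assume "u = Inl i" "v = Inl j" then show ?thesis by auto
  next
    fix e e' assume "u = Inr e" "v = Inr e'" then show ?thesis by auto
  next
    fix i e assume uv: "u = Inl i" "v = Inr e"
    have "i < k" "e \<subseteq> {0..<k}" using u v uv unfolding fsK_verts VfK_def by auto
    then have "\<sigma> i \<in> \<sigma> ` e \<longleftrightarrow> i \<in> e" using inj by (meson inj_on_image_mem_iff atLeastLessThan_iff zero_le)
    then show ?thesis using uv by auto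
  next
    fix e i assume uv: "u = Inr e" "v = Inl i"
    have "i < k" "e \<subseteq> {0..<k}" using u v uv unfolding fsK_verts VfK_def by auto
    then have "\<sigma> i \<in> \<sigma> ` e \<longleftrightarrow> i \<in> e" using inj by (meson inj_on_image_mem_iff atLeastLessThan_iff zero_le)
    then show ?thesis using uv by auto
  qed
  show ?thesis using fsK_arcs_iff[OF u v] fsK_arcs_iff[OF Lu] key by simp
qed

context sub
begin

definition T where "T = g ` WK {0..<m}"

lemma H_graph: "graph H" using isoH unfolding isometric_subgraph_def subgraph_def by simp

lemma iso_gK: "K \<subseteq> {0..<m} \<Longrightarrow> graph_iso g (induced G (WK K)) (induced (hypercube m) (g ` WK K))"
  unfolding graph_iso_def
proof (intro conjI ballI)
  assume K: "K \<subseteq> {0..<m}"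
  show "bij_betw g (verts (induced G (WK K))) (verts (induced (hypercube m) (g ` WK K)))"
    using g_inj[OF K] unfolding bij_betw_def by simp
  fix u v assume "u \<in> verts (induced G (WK K))" "v \<in> verts (induced G (WK K))"
  then have uv: "u \<in> WK K" "v \<in> WK K" by auto
  then have uvG: "u \<in> verts G" "v \<in> verts G" unfolding WK_def by auto
  have "(u, v) \<in> arcs (induced G (WK K)) \<longleftrightarrow> (u, v) \<in> arcs G" using uv unfolding induced_def by auto
  also have "\<dots> \<longleftrightarrow> card (sd (g u) (g v)) = 1" using arc_iff[OF uvG] ham_g[OF K uv] by simp
  also have "\<dots> \<longleftrightarrow> (g u, g v) \<in> arcs (induced (hypercube m) (g ` WK K))"
    using uv g_sub by (simp add: induced_hc_arcs)
  finally show "(u, v) \<in> arcs (induced G (WK K)) \<longleftrightarrow> (g u, g v) \<in> arcs (induced (hypercube m) (g ` WK K))" .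
qed

lemma T_K: "K \<subseteq> {0..<m} \<Longrightarrow> g ` WK K = T \<inter> Pow K"
proof
  assume K: "K \<subseteq> {0..<m}"
  show "g ` WK K \<subseteq> T \<inter> Pow K" unfolding T_def using g_coord[OF K] WK_mono[OF K] by blast
  show "T \<inter> Pow K \<subseteq> g ` WK K"
  proof
    fix t assume t: "t \<in> T \<inter> Pow K"
    then obtain v where v: "v \<in> WK {0..<m}" "t = g v" unfolding T_def by auto
    have "sd (f v) c = a ` g v" using g_coord[OF _ v(1)] by simp
    then have "sd (f v) c \<subseteq> a ` K" using t v by auto
    then have "v \<in> WK K" using v unfolding WK_def by auto
    then show "t \<in> g ` WK K" using v by auto
  qed
qed

lemma T_sub: "T \<subseteq> Pow {0..<m}" unfolding T_def using g_sub by auto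

lemma a_eq: "i < m \<Longrightarrow> j < m \<Longrightarrow> a i = a j \<Longrightarrow> i = j" using a_neq by blast

lemma g_x: "i < m \<Longrightarrow> g (x i) = {i}"
proof -
  assume i: "i < m"
  have "sd (f (x i)) c = {a i}" using x_coord[OF i] by (simp add: sd_cancel2)
  then show ?thesis unfolding g_def using i by (auto dest: a_eq)
qed

lemma g_y: "i < m \<Longrightarrow> j < m \<Longrightarrow> i \<noteq> j \<Longrightarrow> g (y i j) = {i, j}"
proof -
  assume ij: "i < m" "j < m" "i \<noteq> j"
  have "sd (f (y i j)) c = {a i, a j}" using y_coord[OF ij] by (simp add: sd_cancel2)
  then show ?thesis unfolding g_def using ij by (auto dest: a_eq)
qed

lemma x_WK: "i < m \<Longrightarrow> x i \<in> WK {0..<m}" using VK_WK[of "{0..<m}"] unfolding VK_def by auto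
lemma y_WK: "i < m \<Longrightarrow> j < m \<Longrightarrow> i \<noteq> j \<Longrightarrow> y i j \<in> WK {0..<m}"
proof -
  assume ij: "i < m" "j < m" "i \<noteq> j"
  have "y i j \<in> VK {0..<m}" unfolding VK_def using ij by auto
  then show ?thesis using VK_WK[of "{0..<m}"] by blast
qed

lemma T_single: "i < m \<Longrightarrow> {i} \<in> T" unfolding T_def using g_x x_WK by (metis image_eqI)
lemma T_pair: "i < m \<Longrightarrow> j < m \<Longrightarrow> i \<noteq> j \<Longrightarrow> {i, j} \<in> T" unfolding T_def using g_y y_WK by (metis image_eqI)

lemma gdist_g: "u \<in> WK {0..<m} \<Longrightarrow> v \<in> WK {0..<m} \<Longrightarrow> gdist G u v = card (sd (g u) (g v))"
  using ham ham_g[of "{0..<m}"] unfolding WK_def by auto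

lemma g_between: assumes u: "u \<in> WK {0..<m}" and v: "v \<in> WK {0..<m}"
  and p: "walk_betw G u p v" "length p = Suc (gdist G u v)" and z: "z \<in> set p"
  shows "z \<in> WK {0..<m} \<and> g u \<inter> g v \<subseteq> g z \<and> g z \<subseteq> g u \<union> g v"
proof -
  have zW: "z \<in> WK {0..<m}" using WK_convex[of "{0..<m}"] u v p z unfolding convex_set_def by blast
  have "f u \<inter> f v \<subseteq> f z \<and> f z \<subseteq> f u \<union> f v" using geodesic_between p z by blast
  then have r: "sd (f u) c \<inter> sd (f v) c \<subseteq> sd (f z) c \<and> sd (f z) c \<subseteq> sd (f u) c \<union> sd (f v) c"
    using rel_between by blast
  have e: "sd (f u) c = a ` g u" "sd (f v) c = a ` g v" "sd (f z) c = a ` g z"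
    using g_coord[OF _ u] g_coord[OF _ v] g_coord[OF _ zW] by auto
  have s: "g u \<subseteq> {0..<m}" "g v \<subseteq> {0..<m}" "g z \<subseteq> {0..<m}" using g_sub by auto
  have "g u \<inter> g v \<subseteq> g z"
  proof
    fix i assume "i \<in> g u \<inter> g v"
    then have "a i \<in> a ` g z" using r e by blast
    then show "i \<in> g z" using a_inj s \<open>i \<in> g u \<inter> g v\<close> by (meson inj_on_image_mem_iff IntD1 subsetD)
  qed
  moreover have "g z \<subseteq> g u \<union> g v"
  proof
    fix i assume i: "i \<in> g z"
    then have "a i \<in> a ` g u \<or> a i \<in> a ` g v" using r e by blast
    then show "i \<in> g u \<union> g v" using a_inj s i by (meson inj_on_image_mem_iff UnI1 UnI2 subsetD)
  qed
  ultimately show ?thesis using zW by simp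
qed

end

context sub2
begin

lemma T_empty: "{} \<notin> T"
proof
  assume "{} \<in> T"
  then obtain v where v: "v \<in> WK {0..<m}" "g v = {}" unfolding T_def by auto
  then have "sd (f v) c = {}" using g_coord[OF _ v(1)] by simp
  then have "f v = c" by (metis sd_eq_iff sd_empty(1))
  then show False using not_center v unfolding WK_def by auto
qed

lemma T_full_cosingle:
  assumes F: "{0..<m} \<in> T" and ij: "i < m" "j < m" "i \<noteq> j" and Fij: "{0..<m} - {i, j} \<in> T"
  shows "{0..<m} - {i} \<in> T \<or> {0..<m} - {j} \<in> T"
proof -
  obtain w where w: "w \<in> WK {0..<m}" "g w = {0..<m}" using F unfolding T_def by auto
  obtain u where u: "u \<in> WK {0..<m}" "g u = {0..<m} - {i, j}" using Fij unfolding T_def by auto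
  have wG: "w \<in> verts G" "u \<in> verts G" using w u unfolding WK_def by auto
  have "sd (g w) (g u) = {i, j}" unfolding w(2) u(2) sd_def using ij(1,2) by auto
  then have gd: "gdist G w u = 2" using gdist_g[OF w(1) u(1)] ij by simp
  obtain p where p: "walk_betw G w p u" "length p = Suc (gdist G w u)" using gdist_walk[OF conn wG] by blast
  define z where "z = p ! 1"
  have zs: "z \<in> set p" using p gd unfolding z_def by simp
  have pw: "walk G p" "hd p = w" using p unfolding walk_betw_def by auto
  have "p \<noteq> []" using p by auto
  then have "p ! 0 = w" using pw(2) by (simp add: hd_conv_nth)
  moreover have "(p ! 0, p ! Suc 0) \<in> arcs G" using pw(1) p gd unfolding walk_def by auto
  ultimately have arc: "(w, z) \<in> arcs G" unfolding z_def by simp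
  have bz: "z \<in> WK {0..<m} \<and> g w \<inter> g u \<subseteq> g z \<and> g z \<subseteq> g w \<union> g u" by (rule g_between[OF w(1) u(1) p zs])
  have zG: "z \<in> verts G" using bz unfolding WK_def by auto
  have "card (sd (g w) (g z)) = 1" using arc arc_iff wG zG ham_g[of "{0..<m}" w z] w bz by auto
  then obtain e where e: "sd (g w) (g z) = {e}" using card_1_singletonE by blast
  have sub: "{0..<m} - {i, j} \<subseteq> g z" "g z \<subseteq> {0..<m}" using bz w u by auto
  then have "g z = {0..<m} - {e}" "e \<in> {i, j}" using e w(2) unfolding sd_def by auto
  then have gz: "g z = {0..<m} - {i} \<or> g z = {0..<m} - {j}" by auto
  have "g z \<in> T" using bz unfolding T_def by (intro imageI) simp
  with gz show ?thesis by (elim disjE) simp_all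
qed

end


lemma walk_mono: "verts A \<subseteq> verts B \<Longrightarrow> arcs A \<subseteq> arcs B \<Longrightarrow> walk A p \<Longrightarrow> walk B p"
  unfolding walk_def by auto

context sub
begin

lemma arcH_xy: "i < m \<Longrightarrow> j < m \<Longrightarrow> i \<noteq> j \<Longrightarrow> (x i, y i j) \<in> arcs H \<and> (y i j, x i) \<in> arcs H"
proof -
  assume a: "i < m" "j < m" "i \<noteq> j"
  show ?thesis
    using iso fsK_arc[OF a] fsK_Inl fsK_Inr[OF a] a unfolding graph_iso_def x_def y_def by blast
qed

lemma phi_VfK: "\<phi> ` VfK K = VK K"
  unfolding VfK_def VK_def x_def y_def by blast

end

context sub2
begin

context
  fixes K :: "nat set" and k :: nat and \<sigma> :: "nat \<Rightarrow> nat"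
  assumes K: "K \<subseteq> {0..<m}" and kK: "k = card K" and s: "bij_betw \<sigma> {0..<k} K"
begin

definition HK where "HK = induced H (VK K)"
definition \<phi>K where "\<phi>K = \<phi> \<circ> map_sum \<sigma> ((`) \<sigma>)"

lemma VfK_sub: "VfK K \<subseteq> verts (full_subdiv_K m)"
  using VfK_mono[OF K] fsK_verts by blast

lemma phi_inj_VfK: "inj_on \<phi> (VfK K)"
  using iso VfK_sub unfolding graph_iso_def bij_betw_def by (meson inj_on_subset)

lemma VK_H: "VK K \<subseteq> verts H"
proof -
  have "\<phi> ` verts (full_subdiv_K m) = verts H" using iso unfolding graph_iso_def bij_betw_def by simp
  then have "\<phi> ` VfK K \<subseteq> verts H" using VfK_sub by blast
  then show ?thesis using phi_VfK by simp
qed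

lemma HK_iso: "graph_iso \<phi>K (full_subdiv_K k) HK"
  unfolding graph_iso_def
proof (intro conjI ballI)
  have b1: "bij_betw (map_sum \<sigma> ((`) \<sigma>)) (verts (full_subdiv_K k)) (VfK K)"
    using lift_bij[OF s] fsK_verts by simp
  have b2: "bij_betw \<phi> (VfK K) (VK K)" using phi_inj_VfK phi_VfK unfolding bij_betw_def by simp
  show "bij_betw \<phi>K (verts (full_subdiv_K k)) (verts HK)"
    unfolding \<phi>K_def HK_def using bij_betw_trans[OF b1 b2] by simp
  fix u v assume u: "u \<in> verts (full_subdiv_K k)" and v: "v \<in> verts (full_subdiv_K k)"
  have Lu: "map_sum \<sigma> ((`) \<sigma>) u \<in> VfK K" "map_sum \<sigma> ((`) \<sigma>) v \<in> VfK K"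
    using b1 u v unfolding bij_betw_def by auto
  have Lu': "map_sum \<sigma> ((`) \<sigma>) u \<in> verts (full_subdiv_K m)" "map_sum \<sigma> ((`) \<sigma>) v \<in> verts (full_subdiv_K m)"
    using Lu VfK_sub by auto
  have "(u, v) \<in> arcs (full_subdiv_K k) \<longleftrightarrow>
      (map_sum \<sigma> ((`) \<sigma>) u, map_sum \<sigma> ((`) \<sigma>) v) \<in> arcs (full_subdiv_K m)"
    by (rule lift_arcs[OF s K u v])
  also have "\<dots> \<longleftrightarrow> (\<phi>K u, \<phi>K v) \<in> arcs H" using iso Lu' unfolding graph_iso_def \<phi>K_def by simp
  also have "\<dots> \<longleftrightarrow> (\<phi>K u, \<phi>K v) \<in> arcs HK"
  proof -
    have "\<phi>K u \<in> VK K" "\<phi>K v \<in> VK K" using Lu phi_VfK unfolding \<phi>K_def by auto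
    then show ?thesis unfolding HK_def induced_def by auto
  qed
  finally show "(u, v) \<in> arcs (full_subdiv_K k) \<longleftrightarrow> (\<phi>K u, \<phi>K v) \<in> arcs HK" .
qed

lemma HK_verts: "verts HK = VK K" unfolding HK_def by simp

lemma HK_graph: "graph HK" unfolding HK_def using H_graph by (rule graph_induced)

lemma HK_subH: "subgraph HK H"
  unfolding subgraph_def using HK_graph VK_H unfolding HK_def induced_def by auto

lemma HK_subG: "verts HK \<subseteq> verts G" "arcs HK \<subseteq> arcs G"
  using HK_subH subHG unfolding subgraph_def by auto

lemma HK_ne: "K \<noteq> {0..<m} \<Longrightarrow> HK \<noteq> H"
proof
  assume Kn: "K \<noteq> {0..<m}" and e: "HK = H"
  have "\<not> {0..<m} \<subseteq> K" using K Kn by auto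
  then obtain j where j0: "j \<in> {0..<m}" "j \<notin> K" by blast
  then have j: "j < m" "j \<notin> K" by auto
  have "x j \<in> verts H" using xH j by simp
  then have "x j \<in> VK K" using e HK_verts by simp
  then obtain w where w: "w \<in> VfK K" "\<phi> w = \<phi> (Inl j)" using phi_VfK unfolding x_def by (metis imageE)
  have "Inl j \<in> verts (full_subdiv_K m)" using j fsK_Inl by simp
  then have "w = Inl j" using iso w VfK_sub unfolding graph_iso_def bij_betw_def inj_on_def by blast
  then show False using w j unfolding VfK_def by auto
qed

lemma arcHK_xy: "i \<in> K \<Longrightarrow> j \<in> K \<Longrightarrow> i \<noteq> j \<Longrightarrow> (x i, y i j) \<in> arcs HK \<and> (y i j, x i) \<in> arcs HK"
proof -
  assume ij: "i \<in> K" "j \<in> K" "i \<noteq> j"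
  then have "i < m" "j < m" using K by auto
  then have "(x i, y i j) \<in> arcs H \<and> (y i j, x i) \<in> arcs H" using arcH_xy ij by simp
  moreover have "x i \<in> VK K" "y i j \<in> VK K" unfolding VK_def using ij by auto
  ultimately show ?thesis unfolding HK_def induced_def by auto
qed

lemma xVK: "i \<in> K \<Longrightarrow> x i \<in> verts HK" unfolding HK_verts VK_def by auto

lemma w_single: "u \<in> verts HK \<Longrightarrow> walk_betw HK u [u] u"
  unfolding walk_betw_def by (simp add: walk_single)

lemma w_xy: "i \<in> K \<Longrightarrow> j \<in> K \<Longrightarrow> i \<noteq> j \<Longrightarrow> walk_betw HK (x i) [x i, y i j] (y i j)"
  unfolding walk_betw_def using arcHK_xy HK_graph unfolding graph_def
  by (auto simp: walk_Cons_Cons walk_single)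

lemma w_yx: "i \<in> K \<Longrightarrow> j \<in> K \<Longrightarrow> i \<noteq> j \<Longrightarrow> walk_betw HK (y i j) [y i j, x i] (x i)"
  unfolding walk_betw_def using arcHK_xy HK_graph unfolding graph_def
  by (auto simp: walk_Cons_Cons walk_single)

lemma w_xx: "i \<in> K \<Longrightarrow> j \<in> K \<Longrightarrow> i \<noteq> j \<Longrightarrow> walk_betw HK (x i) [x i, y i j, x j] (x j)"
proof -
  assume ij: "i \<in> K" "j \<in> K" "i \<noteq> j"
  have "(x i, y i j) \<in> arcs HK" "(y j i, x j) \<in> arcs HK" using arcHK_xy ij by auto
  then show ?thesis unfolding walk_betw_def using HK_graph y_sym[of i j] unfolding graph_def
    by (auto simp: walk_Cons_Cons walk_single)
qed

lemma gdistG_xx: "i \<in> K \<Longrightarrow> j \<in> K \<Longrightarrow> gdist G (x i) (x j) = card (sd {i} {j})"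
proof -
  assume a: "i \<in> K" "j \<in> K"
  then have m: "i < m" "j < m" using K by auto
  show ?thesis using gdist_g[OF x_WK[OF m(1)] x_WK[OF m(2)]] g_x m by simp
qed

lemma gdistG_xy: "i \<in> K \<Longrightarrow> j \<in> K \<Longrightarrow> l \<in> K \<Longrightarrow> j \<noteq> l \<Longrightarrow> gdist G (x i) (y j l) = card (sd {i} {j, l})"
proof -
  assume a: "i \<in> K" "j \<in> K" "l \<in> K" "j \<noteq> l"
  then have m: "i < m" "j < m" "l < m" using K by auto
  show ?thesis using gdist_g[OF x_WK[OF m(1)] y_WK[OF m(2,3) a(4)]] g_x g_y m a(4) by simp
qed

lemma gdistG_yy: "i \<in> K \<Longrightarrow> j \<in> K \<Longrightarrow> i \<noteq> j \<Longrightarrow> k' \<in> K \<Longrightarrow> l \<in> K \<Longrightarrow> k' \<noteq> l \<Longrightarrow>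
   gdist G (y i j) (y k' l) = card (sd {i, j} {k', l})"
proof -
  assume a: "i \<in> K" "j \<in> K" "i \<noteq> j" "k' \<in> K" "l \<in> K" "k' \<noteq> l"
  then have m: "i < m" "j < m" "k' < m" "l < m" using K by auto
  show ?thesis using gdist_g[OF y_WK[OF m(1,2) a(3)] y_WK[OF m(3,4) a(6)]] g_y m a(3,6) by simp
qed

lemma walk_xy_gen: "i \<in> K \<Longrightarrow> j \<in> K \<Longrightarrow> l \<in> K \<Longrightarrow> j \<noteq> l \<Longrightarrow>
   \<exists>p. walk_betw HK (x i) p (y j l) \<and> length p \<le> Suc (gdist G (x i) (y j l))"
proof -
  assume a: "i \<in> K" "j \<in> K" "l \<in> K" "j \<noteq> l"
  consider "i = j" | "i = l" | "i \<noteq> j" "i \<noteq> l" by blast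
  then show ?thesis
  proof cases
    case 1 then show ?thesis using w_xy[of j l] a gdistG_xy[OF a] unfolding sd_def by fastforce
  next
    case 2 then show ?thesis using w_xy[of l j] a gdistG_xy[OF a] y_sym[of j l] unfolding sd_def by fastforce
  next
    case 3
    have "walk_betw HK (x i) ([x i, y i j, x j] @ tl [x j, y j l]) (y j l)"
      using walk_betw_append[OF w_xx[of i j] w_xy[of j l]] a 3 by simp
    moreover have "gdist G (x i) (y j l) = 3" using gdistG_xy[OF a] 3 a unfolding sd_def by auto
    ultimately show ?thesis by fastforce
  qed
qed

lemma walk_yy_gen: "i \<in> K \<Longrightarrow> j \<in> K \<Longrightarrow> i \<noteq> j \<Longrightarrow> k' \<in> K \<Longrightarrow> l \<in> K \<Longrightarrow> k' \<noteq> l \<Longrightarrow>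
   \<exists>p. walk_betw HK (y i j) p (y k' l) \<and> length p \<le> Suc (gdist G (y i j) (y k' l))"
proof -
  assume a: "i \<in> K" "j \<in> K" "i \<noteq> j" "k' \<in> K" "l \<in> K" "k' \<noteq> l"
  have gd: "gdist G (y i j) (y k' l) = card (sd {i, j} {k', l})" by (rule gdistG_yy[OF a])
  show ?thesis
  proof (cases "{i, j} = {k', l}")
    case True
    then have "y i j = y k' l" unfolding y_def by simp
    moreover have "y i j \<in> verts HK" unfolding HK_verts VK_def using a by auto
    ultimately show ?thesis using w_single by fastforce
  next
    case False
    show ?thesis
    proof (cases "{i, j} \<inter> {k', l} = {}")
      case True
      then have "j \<noteq> k'" by auto
      have w1: "walk_betw HK (y j i) [y j i, x j] (x j)" using w_yx[of j i] a by simp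
      have w2: "walk_betw HK (x j) [x j, y j k', x k'] (x k')" using w_xx[of j k'] a \<open>j \<noteq> k'\<close> by simp
      have w3: "walk_betw HK (x k') [x k', y k' l] (y k' l)" using w_xy[of k' l] a by simp
      have w12: "walk_betw HK (y j i) ([y j i, x j] @ tl [x j, y j k', x k']) (x k')"
        using walk_betw_append[OF w1 w2] by simp
      have w: "walk_betw HK (y i j) (([y j i, x j] @ tl [x j, y j k', x k']) @ tl [x k', y k' l]) (y k' l)"
        using walk_betw_append[OF w12 w3] y_sym[of i j] by simp
      have "sd {i, j} {k', l} = {i, j, k', l}" using True unfolding sd_def by auto
      then have "gdist G (y i j) (y k' l) = 4" using gd True a by auto
      then show ?thesis using w by fastforce
    next
      case False
      then obtain t where t: "t \<in> {i, j}" "t \<in> {k', l}" by blast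
      obtain j' where j': "{i, j} = {t, j'}" "t \<noteq> j'" "j' \<in> K" using t a by auto
      obtain l' where l': "{k', l} = {t, l'}" "t \<noteq> l'" "l' \<in> K" using t a by auto
      have jl: "j' \<noteq> l'" using j' l' \<open>{i, j} \<noteq> {k', l}\<close> by auto
      have tK: "t \<in> K" using t a by auto
      have e1: "y i j = y t j'" "y k' l = y t l'" unfolding y_def using j' l' by auto
      have w: "walk_betw HK (y t j') ([y t j', x t] @ tl [x t, y t l']) (y t l')"
        using walk_betw_append[OF w_yx[of t j'] w_xy[of t l']] tK j' l' by simp
      have "sd {t, j'} {t, l'} = {j', l'}" using j' l' jl unfolding sd_def by auto
      then have "gdist G (y i j) (y k' l) = 2" using gd j' l' jl by simp
      then show ?thesis using w e1 by fastforce
    qed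
  qed
qed

lemma walk_K: "u \<in> VK K \<Longrightarrow> v \<in> VK K \<Longrightarrow> \<exists>p. walk_betw HK u p v \<and> length p \<le> Suc (gdist G u v)"
proof -
  assume u: "u \<in> VK K" and v: "v \<in> VK K"
  have gsym: "gdist G u v = gdist G v u"
    using u v VK_WK[of "{0..<m}"] VK_WK[OF K] gdist_g sd_comm WK_mono[OF K] by (metis subsetD)
  consider i where "i \<in> K" "u = x i" | i j where "i \<in> K" "j \<in> K" "i \<noteq> j" "u = y i j"
    using u unfolding VK_def by blast
  then show ?thesis
  proof cases
    case 1
    note U = 1
    consider i' where "i' \<in> K" "v = x i'" | i' j' where "i' \<in> K" "j' \<in> K" "i' \<noteq> j'" "v = y i' j'"
      using v unfolding VK_def by blast
    then show ?thesis
    proof cases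
      case 1
      note V = 1
      show ?thesis
      proof (cases "i = i'")
        case True then show ?thesis using U V w_single xVK by fastforce
      next
        case False
        have "gdist G u v = 2" using gdistG_xx[of i i'] U V False unfolding sd_def by auto
        then show ?thesis using w_xx[of i i'] U V False by fastforce
      qed
    next
      case 2 then show ?thesis using walk_xy_gen[of i i' j'] U by auto
    qed
  next
    case 2
    note U = 2
    consider i' where "i' \<in> K" "v = x i'" | i' j' where "i' \<in> K" "j' \<in> K" "i' \<noteq> j'" "v = y i' j'"
      using v unfolding VK_def by blast
    then show ?thesis
    proof cases
      case 1
      obtain p where p: "walk_betw HK v p u" "length p \<le> Suc (gdist G v u)"
        using walk_xy_gen[of i' i j] 1 U by auto
      then show ?thesis using walk_betw_rev[OF HK_graph p(1)] gsym by fastforce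
    next
      case 2
      then show ?thesis using walk_yy_gen[of i j i' j'] U by auto
    qed
  qed
qed

lemma HK_conn: "connected_graph HK"
  unfolding connected_graph_def using walk_K HK_verts by blast

lemma HK_isometric: "isometric_subgraph HK G"
  unfolding isometric_subgraph_def
proof (intro conjI ballI)
  show "subgraph HK G" unfolding subgraph_def using HK_graph HK_subG by simp
  show "connected_graph HK" by (rule HK_conn)
  fix u v assume uv: "u \<in> verts HK" "v \<in> verts HK"
  obtain p where p: "walk_betw HK u p v" "length p \<le> Suc (gdist G u v)" using walk_K uv HK_verts by blast
  have le1: "gdist HK u v \<le> gdist G u v" using gdist_le[OF p(1)] p(2) by simp
  obtain q where q: "walk_betw HK u q v" "length q = Suc (gdist HK u v)" using gdist_walk[OF HK_conn uv] by blast
  have "walk_betw G u q v" using q(1) walk_mono[OF HK_subG] unfolding walk_betw_def by blast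
  then have le2: "gdist G u v \<le> gdist HK u v" using gdist_le q(2) by fastforce
  show "gdist HK u v = gdist G u v" using le1 le2 by simp
qed

lemma HK_noA: "3 \<le> k \<Longrightarrow> \<not> (\<exists>v\<in>verts G. \<forall>i<k. (v, \<phi>K (Inl i)) \<in> arcs G)"
proof
  assume k3: "3 \<le> k" and "\<exists>v\<in>verts G. \<forall>i<k. (v, \<phi>K (Inl i)) \<in> arcs G"
  then obtain v where v: "v \<in> verts G" "\<forall>i<k. (v, x (\<sigma> i)) \<in> arcs G" unfolding \<phi>K_def x_def by auto
  have inj: "inj_on \<sigma> {0..<k}" and im: "\<sigma> ` {0..<k} \<subseteq> {0..<m}" using s K unfolding bij_betw_def by auto
  have lt: "\<sigma> 0 < m" "\<sigma> 1 < m" "\<sigma> 2 < m" using im k3 by (auto simp: image_subset_iff)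
  have ne: "\<sigma> 0 \<noteq> \<sigma> 1" "\<sigma> 0 \<noteq> \<sigma> 2" "\<sigma> 1 \<noteq> \<sigma> 2"
    using inj_onD[OF inj, of 0 1] inj_onD[OF inj, of 0 2] inj_onD[OF inj, of 1 2] k3 by auto
  show False using no_common_nbr[OF v(1) lt ne] v(2) k3 by auto
qed

end

lemma subK_result:
  assumes K: "K \<subseteq> {0..<m}" and k3: "3 \<le> card K" and Kn: "K \<noteq> {0..<m}"
    and minH: "\<forall>H'. subgraph H' H \<and> H' \<noteq> H \<longrightarrow> \<not> good_subdivision G H'"
  shows "isomorphic (induced (hypercube m) (T \<inter> Pow K)) (Qminus (card K)) \<or>
         isomorphic (induced (hypercube m) (T \<inter> Pow K)) (Qminusminus (card K))"
proof -
  have fK: "finite K" using K finite_subset by blast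
  obtain \<sigma> where s: "bij_betw \<sigma> {0..<card K} K" using ex_bij_betw_nat_finite[OF fK] by blast
  note L = HK_iso[OF K refl s] HK_verts[OF K refl s] HK_subH[OF K refl s] HK_ne[OF K refl s Kn]
    HK_isometric[OF K refl s] HK_noA[OF K refl s k3]
  let ?HK = "HK K" and ?\<phi> = "\<phi>K \<sigma>"
  have "\<not> good_subdivision G ?HK" using minH L by blast
  then have "\<not> cond_ab G ?HK (card K) ?\<phi>" using L unfolding good_subdivision_def by blast
  then have c: "isomorphic (conv G ?HK) (Qminus (card K)) \<or> isomorphic (conv G ?HK) (Qminusminus (card K))"
    using L unfolding cond_ab_def by blast
  have "conv G ?HK = induced G (WK K)" by (rule conv_WK[OF K L(2)])
  moreover have "isomorphic (induced (hypercube m) (T \<inter> Pow K)) (induced G (WK K))"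
    using iso_gK[OF K] T_K[OF K] graph_iso_isomorphic isomorphic_sym by metis
  ultimately show ?thesis using c isomorphic_trans by metis
qed

end


lemma card_Qminus: "card (verts (Qminus k)) = 2 ^ k - 1"
  unfolding Qminus_def by (simp add: card_Diff_singleton card_Pow)

lemma card_Qminusminus: "1 \<le> k \<Longrightarrow> card (verts (Qminusminus k)) = 2 ^ k - 2"
proof -
  assume k: "1 \<le> k"
  have ne: "{0..<k} \<noteq> ({}::nat set)" using k by auto
  have "card (Pow {0..<k} - {{0..<k}, {}}) = card (Pow {0..<k}) - card {{0..<k}, ({}::nat set)}"
    by (rule card_Diff_subset) auto
  then show ?thesis unfolding Qminusminus_def using ne by (simp add: card_Pow)
qed

lemma grow_walk:
  assumes K: "K \<subseteq> {0..<n}" and j: "j \<in> K" and V: "{X. j \<in> X \<and> X \<subseteq> K} \<subseteq> V"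
  shows "finite Z \<Longrightarrow> Z \<subseteq> K - {j} \<Longrightarrow> \<exists>p. walk_betw (induced (hypercube n) V) {j} p (insert j Z) \<and> length p = Suc (card Z)"
proof (induction Z rule: finite_induct)
  case empty
  have "{j} \<in> V" using V j by auto
  then show ?case unfolding walk_betw_def by (intro exI[of _ "[{j}]"]) (auto simp: walk_single)
next
  case (insert z Z)
  obtain p where p: "walk_betw (induced (hypercube n) V) {j} p (insert j Z)" "length p = Suc (card Z)"
    using insert by auto
  have zj: "z \<noteq> j" "z \<notin> Z" using insert by auto
  have mem: "insert j Z \<in> V" "insert j (insert z Z) \<in> V" using V insert j by auto
  have sub: "insert j Z \<subseteq> {0..<n}" "insert j (insert z Z) \<subseteq> {0..<n}" using insert K j by auto
  have "sd (insert j Z) (insert j (insert z Z)) = {z}" using zj unfolding sd_def by auto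
  then have "(insert j Z, insert j (insert z Z)) \<in> arcs (induced (hypercube n) V)"
    using mem sub by (simp add: induced_hc_arcs)
  moreover have "walk (induced (hypercube n) V) p" "last p = insert j Z" "hd p = {j}" "p \<noteq> []"
    using p unfolding walk_betw_def walk_def by auto
  ultimately have "walk (induced (hypercube n) V) (p @ [insert j (insert z Z)])"
    using mem by (intro walk_snoc) auto
  then have "walk_betw (induced (hypercube n) V) {j} (p @ [insert j (insert z Z)]) (insert j (insert z Z))"
    using \<open>hd p = {j}\<close> \<open>p \<noteq> []\<close> unfolding walk_betw_def by simp
  moreover have "length (p @ [insert j (insert z Z)]) = Suc (card (insert z Z))" using p insert by simp
  ultimately show ?case by blast
qed

lemma reach_from_j:
  assumes K: "K \<subseteq> {0..<n}" and j: "j \<in> K" and w: "w \<in> Pow K - {{}, K - {j}}"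
  shows "\<exists>p. walk_betw (induced (hypercube n) (Pow K - {{}, K - {j}})) {j} p w \<and> length p \<le> card K"
proof -
  let ?V = "Pow K - {{}, K - {j}}"
  have fK: "finite K" using K finite_subset by blast
  have V: "{X. j \<in> X \<and> X \<subseteq> K} \<subseteq> ?V" by auto
  show ?thesis
  proof (cases "j \<in> w")
    case True
    have fw: "finite (w - {j})" using w fK finite_subset by auto
    obtain p where p: "walk_betw (induced (hypercube n) ?V) {j} p (insert j (w - {j}))" "length p = Suc (card (w - {j}))"
      using grow_walk[OF K j V fw] w by auto
    have "insert j (w - {j}) = w" using True by auto
    moreover have "card (w - {j}) < card K"
    proof -
      have wK: "w \<subseteq> K" using w by auto
      then have fw': "finite w" using fK finite_subset by blast
      have "card (w - {j}) < card w" using card_Diff1_less[OF fw' True] .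
      also have "card w \<le> card K" using card_mono[OF fK wK] .
      finally show ?thesis .
    qed
    ultimately show ?thesis using p by auto
  next
    case False
    have fw: "finite w" using w fK finite_subset by auto
    have ws: "w \<subseteq> K - {j}" using w False by auto
    obtain p where p: "walk_betw (induced (hypercube n) ?V) {j} p (insert j w)" "length p = Suc (card w)"
      using grow_walk[OF K j V fw ws] by auto
    have wmem: "w \<in> ?V" "insert j w \<in> ?V" using w j ws by auto
    have "sd (insert j w) w = {j}" using False unfolding sd_def by auto
    moreover have "insert j w \<subseteq> {0..<n}" "w \<subseteq> {0..<n}" using K j ws by auto
    ultimately have "(insert j w, w) \<in> arcs (induced (hypercube n) ?V)"
      using wmem unfolding induced_hc_arcs by simp
    moreover have "walk (induced (hypercube n) ?V) p" "last p = insert j w" "hd p = {j}" "p \<noteq> []"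
      using p unfolding walk_betw_def walk_def by auto
    ultimately have "walk (induced (hypercube n) ?V) (p @ [w])"
      using wmem by (intro walk_snoc) auto
    then have "walk_betw (induced (hypercube n) ?V) {j} (p @ [w]) w"
      using \<open>hd p = {j}\<close> \<open>p \<noteq> []\<close> unfolding walk_betw_def by simp
    moreover have "card w < card K - 1"
    proof -
      have "w \<subset> K - {j}" using ws w by auto
      then have "card w < card (K - {j})" using fK by (meson finite_Diff psubset_card_mono)
      then show ?thesis using j fK by simp
    qed
    ultimately show ?thesis using p by (intro exI[of _ "p @ [w]"]) auto
  qed
qed

lemma walk_transfer:
  assumes h: "graph_iso h A B" and u: "u \<in> verts A"
    and r: "\<forall>w\<in>verts A. \<exists>p. walk_betw A u p w \<and> length p \<le> N"
  shows "\<forall>w'\<in>verts B. \<exists>p. walk_betw B (h u) p w' \<and> length p \<le> N"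
proof
  fix w' assume "w' \<in> verts B"
  then have "w' \<in> h ` verts A" using h unfolding graph_iso_def bij_betw_def by simp
  then obtain w where w: "w \<in> verts A" "w' = h w" by blast
  then obtain p where "walk_betw A u p w" "length p \<le> N" using r by blast
  then show "\<exists>p. walk_betw B (h u) p w' \<and> length p \<le> N" using iso_walk_betw[OF h] w by fastforce
qed

lemma Qmm_no_center: "1 \<le> k \<Longrightarrow> u \<in> verts (Qminusminus k) \<Longrightarrow>
  \<not> (\<forall>w\<in>verts (Qminusminus k). \<exists>p. walk_betw (Qminusminus k) u p w \<and> length p \<le> k)"
proof
  assume k: "1 \<le> k" and u: "u \<in> verts (Qminusminus k)"
    and r: "\<forall>w\<in>verts (Qminusminus k). \<exists>p. walk_betw (Qminusminus k) u p w \<and> length p \<le> k"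
  have us: "u \<subseteq> {0..<k}" "u \<noteq> {}" "u \<noteq> {0..<k}" using u unfolding Qminusminus_def by auto
  have w: "{0..<k} - u \<in> verts (Qminusminus k)" using us unfolding Qminusminus_def by auto
  then obtain p where p: "walk_betw (Qminusminus k) u p ({0..<k} - u)" "length p \<le> k" using r by blast
  have "card (sd (hd p) (last p)) \<le> length p - 1"
    using hc_walk_ham[of "Pow {0..<k} - {{0..<k}, {}}" k p] p unfolding walk_betw_def Qminusminus_def by auto
  moreover have "sd (hd p) (last p) = {0..<k}" using p us unfolding walk_betw_def sd_def by auto
  ultimately show False using p k by simp
qed

lemma big_subset: "Y \<subseteq> {0..<m} \<Longrightarrow> m - 1 \<le> card Y \<Longrightarrow> Y = {0..<m} \<or> (\<exists>i<m. Y = {0..<m} - {i})"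
proof -
  assume Y: "Y \<subseteq> {0..<m}" "m - 1 \<le> card Y"
  have "card ({0..<m} - Y) = m - card Y" using Y by (simp add: card_Diff_subset finite_subset)
  then have c: "card ({0..<m} - Y) \<le> 1" using Y by simp
  show ?thesis
  proof (cases "card ({0..<m} - Y) = 0")
    case True then have "{0..<m} - Y = {}" by simp
    then show ?thesis using Y by auto
  next
    case False
    then obtain i where "{0..<m} - Y = {i}" using c card_1_singletonE by (metis le_neq_implies_less less_one)
    then have "i < m" "Y = {0..<m} - {i}" using Y by auto
    then show ?thesis by blast
  qed
qed

lemma relabel_iso:
  assumes p: "bij_betw \<pi> {0..<m} {0..<m}" and T: "T \<subseteq> Pow {0..<m}"
  shows "graph_iso (\<lambda>X. \<pi> ` ({0..<m} - X)) (induced (hypercube m) T)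
           (induced (hypercube m) ((\<lambda>X. \<pi> ` ({0..<m} - X)) ` T))"
proof (rule hc_iso[OF T])
  have inj: "inj_on \<pi> {0..<m}" and im: "\<pi> ` {0..<m} = {0..<m}" using p unfolding bij_betw_def by auto
  show "(\<lambda>X. \<pi> ` ({0..<m} - X)) ` T \<subseteq> Pow {0..<m}" using im by auto
  show "bij_betw (\<lambda>X. \<pi> ` ({0..<m} - X)) T ((\<lambda>X. \<pi> ` ({0..<m} - X)) ` T)"
    unfolding bij_betw_def
  proof (intro conjI inj_onI refl)
    fix X Y assume XY: "X \<in> T" "Y \<in> T" "\<pi> ` ({0..<m} - X) = \<pi> ` ({0..<m} - Y)"
    then have "{0..<m} - X = {0..<m} - Y" using inj by (meson Diff_subset inj_on_image_eq_iff)
    then show "X = Y" using XY T by auto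
  qed
  fix X Y assume XY: "X \<in> T" "Y \<in> T"
  have "card (sd (\<pi> ` ({0..<m} - X)) (\<pi> ` ({0..<m} - Y))) = card (sd ({0..<m} - X) ({0..<m} - Y))"
    by (rule card_sd_image[OF inj]) auto
  also have "\<dots> = card (sd X Y)"
  proof -
    have "X \<subseteq> {0..<m}" "Y \<subseteq> {0..<m}" using XY T by auto
    then show ?thesis by (simp add: sd_compl)
  qed
  finally show "card (sd (\<pi> ` ({0..<m} - X)) (\<pi> ` ({0..<m} - Y))) = card (sd X Y)" .
qed

lemma relabel_image:
  assumes p: "bij_betw \<pi> {0..<m} {0..<m}" and D: "D \<subseteq> Pow {0..<m}"
  shows "(\<lambda>X. \<pi> ` ({0..<m} - X)) ` (Pow {0..<m} - D) = Pow {0..<m} - (\<lambda>X. \<pi> ` ({0..<m} - X)) ` D"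
proof -
  let ?h = "\<lambda>X. \<pi> ` ({0..<m} - X)"
  have inj: "inj_on \<pi> {0..<m}" and im: "\<pi> ` {0..<m} = {0..<m}" using p unfolding bij_betw_def by auto
  have hinj: "inj_on ?h (Pow {0..<m})"
  proof (rule inj_onI)
    fix X Y assume XY: "X \<in> Pow {0..<m}" "Y \<in> Pow {0..<m}" "?h X = ?h Y"
    then have "{0..<m} - X = {0..<m} - Y" using inj by (meson Diff_subset inj_on_image_eq_iff)
    then show "X = Y" using XY by auto
  qed
  have hsurj: "?h ` Pow {0..<m} = Pow {0..<m}"
  proof
    show "?h ` Pow {0..<m} \<subseteq> Pow {0..<m}" using im by auto
    show "Pow {0..<m} \<subseteq> ?h ` Pow {0..<m}"
    proof
      fix Z assume Z: "Z \<in> Pow {0..<m}"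
      define X where "X = {0..<m} - (the_inv_into {0..<m} \<pi>) ` Z"
      have "(the_inv_into {0..<m} \<pi>) ` Z \<subseteq> {0..<m}" using Z p
        by (metis PowD bij_betw_def bij_betw_the_inv_into image_mono)
      then have "{0..<m} - X = (the_inv_into {0..<m} \<pi>) ` Z" unfolding X_def by auto
      then have "?h X = \<pi> ` (the_inv_into {0..<m} \<pi>) ` Z" by simp
      also have "\<dots> = Z"
      proof -
        have "\<forall>z\<in>Z. \<pi> (the_inv_into {0..<m} \<pi> z) = z" using Z im inj by (metis PowD f_the_inv_into_f subsetD)
        then show ?thesis by (simp add: image_image)
      qed
      finally show "Z \<in> ?h ` Pow {0..<m}" unfolding X_def by blast
    qed
  qed
  show ?thesis using image_set_diff[OF inj_on_subset[OF hinj], of "Pow {0..<m}"] hsurj D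
    by (metis Diff_subset inj_on_image_set_diff hinj)
qed


lemma perm_exists:
  assumes C: "C \<subseteq> {0..<m}"
  shows "\<exists>\<pi>. bij_betw \<pi> {0..<m} {0..<m} \<and> \<pi> ` C = {0..<card C}"
proof -
  have fC: "finite C" using C finite_subset by blast
  obtain f1 where f1: "bij_betw f1 C {0..<card C}" using ex_bij_betw_finite_nat[OF fC] by blast
  have kc: "card C \<le> m" using card_mono[OF _ C] by simp
  have "card ({0..<m} - C) = card ({0..<m} - {0..<card C})"
    using C kc by (simp add: card_Diff_subset fC)
  then obtain f2 where f2: "bij_betw f2 ({0..<m} - C) ({0..<m} - {0..<card C})"
    using finite_same_card_bij by (metis finite_Diff finite_atLeastLessThan)
  define \<pi> where "\<pi> x = (if x \<in> C then f1 x else f2 x)" for x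
  have b1: "bij_betw \<pi> C {0..<card C}" using f1 unfolding \<pi>_def by (rule bij_betw_cong[THEN iffD1, rotated]) auto
  have b2: "bij_betw \<pi> ({0..<m} - C) ({0..<m} - {0..<card C})"
    using f2 unfolding \<pi>_def by (rule bij_betw_cong[THEN iffD1, rotated]) auto
  have "bij_betw \<pi> (C \<union> ({0..<m} - C)) ({0..<card C} \<union> ({0..<m} - {0..<card C}))"
    by (rule bij_betw_combine[OF b1 b2]) auto
  moreover have "C \<union> ({0..<m} - C) = {0..<m}" using C by auto
  moreover have "{0..<card C} \<union> ({0..<m} - {0..<card C}) = {0..<m}" using kc by auto
  ultimately have "bij_betw \<pi> {0..<m} {0..<m}" by simp
  moreover have "\<pi> ` C = {0..<card C}" using b1 unfolding bij_betw_def by simp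
  ultimately show ?thesis by blast
qed

lemma final_iso:
  assumes p: "bij_betw \<pi> {0..<m} {0..<m}" and D: "D \<subseteq> Pow {0..<m}"
  shows "isomorphic (induced (hypercube m) (Pow {0..<m} - D))
           (induced (hypercube m) (Pow {0..<m} - (\<lambda>X. \<pi> ` ({0..<m} - X)) ` D))"
  using relabel_iso[OF p, of "Pow {0..<m} - D"] relabel_image[OF p D] graph_iso_isomorphic
  by fastforce

context sub2
begin

lemma verts_H: "verts H = VK {0..<m}"
proof -
  have "verts H = \<phi> ` verts (full_subdiv_K m)" using iso unfolding graph_iso_def bij_betw_def by simp
  then show ?thesis using fsK_verts phi_VfK by simp
qed

lemma conv_T: "isomorphic (conv G H) (induced (hypercube m) T)"
proof -
  have "conv G H = induced G (WK {0..<m})" by (rule conv_WK[OF _ verts_H]) simp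
  then show ?thesis using iso_gK[of "{0..<m}"] graph_iso_isomorphic unfolding T_def by simp
qed

lemma T_small:
  assumes Y: "Y \<subseteq> {0..<m}" "Y \<noteq> {}" "card Y \<le> 2"
  shows "Y \<in> T"
proof -
  have fY: "finite Y" using Y finite_subset by blast
  have "card Y = 1 \<or> card Y = 2" using Y fY by (metis One_nat_def card_0_eq le_Suc_eq numeral_2_eq_2 le_zero_eq)
  then show ?thesis
  proof
    assume "card Y = 1"
    then obtain e where "Y = {e}" using card_1_singletonE by blast
    then show ?thesis using T_single Y by auto
  next
    assume "card Y = 2"
    then obtain e1 e2 where "Y = {e1, e2}" "e1 \<noteq> e2" using card_2_iff by (metis)
    then show ?thesis using T_pair Y by auto
  qed
qed

lemma stepA:
  assumes minH: "\<forall>H'. subgraph H' H \<and> H' \<noteq> H \<longrightarrow> \<not> good_subdivision G H'"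
  shows "Y \<subseteq> {0..<m} \<Longrightarrow> Y \<noteq> {} \<Longrightarrow> card Y + 2 \<le> m \<Longrightarrow> Y \<in> T"
proof (rule ccontr)
  assume Y: "Y \<subseteq> {0..<m}" "Y \<noteq> {}" "card Y + 2 \<le> m" "Y \<notin> T"
  let ?P = "\<lambda>Y. Y \<subseteq> {0..<m} \<and> Y \<noteq> {} \<and> card Y + 2 \<le> m \<and> Y \<notin> T"
  obtain Y0 where Y0: "?P Y0" and mn: "\<forall>Z. ?P Z \<longrightarrow> card Y0 \<le> card Z"
    using ex_has_least_nat[of ?P Y card] Y by blast
  have fY0: "finite Y0" using Y0 finite_subset by blast
  have c3: "3 \<le> card Y0" using T_small Y0 by (metis not_less_eq_eq numeral_3_eq_3 numeral_2_eq_2)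
  have "card Y0 < card {0..<m}" using Y0 by simp
  then have "\<not> {0..<m} \<subseteq> Y0" using fY0 by (meson card_mono not_le)
  then obtain j where j0: "j \<in> {0..<m}" "j \<notin> Y0" by blast
  then have j: "j < m" "j \<notin> Y0" by auto
  define K where "K = insert j Y0"
  have K: "K \<subseteq> {0..<m}" using Y0 j unfolding K_def by auto
  have cK: "card K = card Y0 + 1" using fY0 j unfolding K_def by simp
  have fK: "finite K" using fY0 unfolding K_def by simp
  have Kn: "K \<noteq> {0..<m}" using cK Y0 by auto
  have k3: "3 \<le> card K" using cK c3 by simp
  have Y0K: "Y0 = K - {j}" using j unfolding K_def by auto
  have sub: "T \<inter> Pow K \<subseteq> Pow K - {{}, Y0}" using T_empty Y0 by auto
  have cPK: "card (Pow K - {{}, Y0}) = 2 ^ card K - 2"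
  proof -
    have "card (Pow K - {{}, Y0}) = card (Pow K) - card {{}, Y0}"
      by (rule card_Diff_subset) (auto simp: K_def)
    moreover have "{} \<noteq> Y0" using Y0 by auto
    then have "card {{}, Y0} = 2" by simp
    ultimately show ?thesis using fK by (simp add: card_Pow)
  qed
  have fin: "finite (Pow K - {{}, Y0})" using fK by simp
  have le: "card (T \<inter> Pow K) \<le> 2 ^ card K - 2" using card_mono[OF fin sub] cPK by simp
  have pos: "2 ^ card K \<ge> (2::nat)" using k3 by (metis One_nat_def Suc_le_eq le_less_trans numeral_3_eq_3 one_less_numeral_iff self_le_power semiring_norm(76) less_imp_le_nat zero_less_Suc)
  from subK_result[OF K k3 Kn minH]
  show False
  proof
    assume "isomorphic (induced (hypercube m) (T \<inter> Pow K)) (Qminus (card K))"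
    then have "card (T \<inter> Pow K) = 2 ^ card K - 1" using iso_card card_Qminus by fastforce
    then show False using le pos by simp
  next
    assume i: "isomorphic (induced (hypercube m) (T \<inter> Pow K)) (Qminusminus (card K))"
    then have "card (T \<inter> Pow K) = 2 ^ card K - 2" using iso_card card_Qminusminus k3 by fastforce
    then have eq: "T \<inter> Pow K = Pow K - {{}, K - {j}}" using card_subset_eq[OF fin sub] cPK Y0K by simp
    obtain h where h: "graph_iso h (induced (hypercube m) (Pow K - {{}, K - {j}})) (Qminusminus (card K))"
      using i eq isomorphic_graph_iso by metis
    have jK: "j \<in> K" unfolding K_def by simp
    have ju: "{j} \<in> verts (induced (hypercube m) (Pow K - {{}, K - {j}}))" using jK Y0K Y0 by auto
    have r: "\<forall>w\<in>verts (induced (hypercube m) (Pow K - {{}, K - {j}})).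
        \<exists>p. walk_betw (induced (hypercube m) (Pow K - {{}, K - {j}})) {j} p w \<and> length p \<le> card K"
      using reach_from_j[OF K jK] by simp
    have "h {j} \<in> verts (Qminusminus (card K))" using h ju unfolding graph_iso_def bij_betw_def by auto
    then show False using walk_transfer[OF h ju r] Qmm_no_center[of "card K" "h {j}"] k3 by simp
  qed
qed

lemma final:
  assumes minH: "\<forall>H'. subgraph H' H \<and> H' \<noteq> H \<longrightarrow> \<not> good_subdivision G H'"
    and bQ: "\<not> isomorphic (conv G H) (Qminus m)" and bQQ: "\<not> isomorphic (conv G H) (Qminusminus m)"
  shows "iso_to_Qminus_family (conv G H)"
proof -
  define F where "F = {0..<m}"
  define C where "C = {i. i < m \<and> F - {i} \<notin> T}"
  have CF: "C \<subseteq> F" unfolding C_def F_def by auto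
  have TP: "T \<subseteq> Pow F" using T_sub unfolding F_def .
  have notT: "Y \<subseteq> F \<Longrightarrow> Y \<notin> T \<Longrightarrow> Y = {} \<or> Y = F \<or> (\<exists>i\<in>C. Y = F - {i})" for Y
  proof -
    assume Y: "Y \<subseteq> F" "Y \<notin> T"
    show ?thesis
    proof (cases "Y = {}")
      case False
      then have "\<not> card Y + 2 \<le> m" using stepA[OF minH] Y unfolding F_def by blast
      then have "m - 1 \<le> card Y" by simp
      then have "Y = F \<or> (\<exists>i<m. Y = F - {i})" using big_subset Y unfolding F_def by blast
      then show ?thesis using Y unfolding C_def by auto
    qed simp
  qed
  have bigm: "C \<noteq> {} \<Longrightarrow> 4 \<le> m"
  proof (rule ccontr)
    assume "C \<noteq> {}" "\<not> 4 \<le> m"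
    then obtain i where i: "i \<in> C" by blast
    then have "i < m" "F - {i} \<notin> T" unfolding C_def by auto
    moreover have "card (F - {i}) \<le> 2" using \<open>\<not> 4 \<le> m\<close> \<open>i < m\<close> unfolding F_def by simp
    moreover have "F - {i} \<noteq> {}"
    proof -
      obtain k where "k < m" "k \<noteq> i" using third[OF m3, of i i] by blast
      then show ?thesis unfolding F_def by auto
    qed
    ultimately show False using T_small unfolding F_def by auto
  qed
  have Tiso: "isomorphic (conv G H) (induced (hypercube m) T)" by (rule conv_T)
  show ?thesis
  proof (cases "F \<in> T")
    case True
    note FT = True
    have C1: "\<forall>i\<in>C. \<forall>j\<in>C. i = j"
    proof (intro ballI, rule ccontr)
      fix i j assume ij: "i \<in> C" "j \<in> C" "i \<noteq> j"
      then have ijm: "i < m" "j < m" "F - {i} \<notin> T" "F - {j} \<notin> T" unfolding C_def by auto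
      have "F - {i, j} \<in> T"
      proof (rule stepA[OF minH])
        show "F - {i, j} \<subseteq> {0..<m}" unfolding F_def by auto
        have "card (F - {i, j}) = m - 2" using ijm ij unfolding F_def by (simp add: card_Diff_subset)
        then show "card (F - {i, j}) + 2 \<le> m" using m3 by simp
        show "F - {i, j} \<noteq> {}"
        proof -
          obtain k where "k < m" "k \<noteq> i" "k \<noteq> j" using third[OF m3] by blast
          then show ?thesis unfolding F_def by auto
        qed
      qed
      then show False using T_full_cosingle[of i j] True ijm ij unfolding F_def by auto
    qed
    show ?thesis
    proof (cases "C = {}")
      case True
      have "T = Pow F - {{}}"
      proof
        show "T \<subseteq> Pow F - {{}}" using TP T_empty by blast
        show "Pow F - {{}} \<subseteq> T"
        proof
          fix Y assume Y: "Y \<in> Pow F - {{}}"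
          show "Y \<in> T"
          proof (rule ccontr)
            assume "Y \<notin> T"
            then have "Y = {} \<or> Y = F \<or> (\<exists>i\<in>C. Y = F - {i})" using notT Y by blast
            then show False using Y FT \<open>Y \<notin> T\<close> True by blast
          qed
        qed
      qed
      then have "isomorphic (induced (hypercube m) T) (induced (hypercube m) (Pow F - (\<lambda>X. id ` (F - X)) ` {{}}))"
        using final_iso[of id m "{{}}"] unfolding F_def by simp
      then have "isomorphic (induced (hypercube m) T) (Qminus m)" unfolding Qminus_def F_def by simp
      then show ?thesis using Tiso bQ isomorphic_trans by blast
    next
      case False
      then obtain i where i: "C = {i}" using C1 by blast
      then have im: "i < m" using CF unfolding F_def by auto
      have "T = Pow F - {{}, F - {i}}"
      proof
        show "T \<subseteq> Pow F - {{}, F - {i}}" using TP T_empty i unfolding C_def by auto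
        show "Pow F - {{}, F - {i}} \<subseteq> T"
        proof
          fix Y assume Y: "Y \<in> Pow F - {{}, F - {i}}"
          show "Y \<in> T"
          proof (rule ccontr)
            assume "Y \<notin> T"
            then have "Y = {} \<or> Y = F \<or> (\<exists>i\<in>C. Y = F - {i})" using notT Y by blast
            then show False using Y FT \<open>Y \<notin> T\<close> i by blast
          qed
        qed
      qed
      obtain \<pi> where p: "bij_betw \<pi> {0..<m} {0..<m}" "\<pi> ` C = {0..<card C}" using perm_exists CF unfolding F_def by blast
      have pi: "\<pi> i = 0" using p(2) i by simp
      have "(\<lambda>X. \<pi> ` ({0..<m} - X)) ` {{}, F - {i}} = {{0..<m}, {0}}"
        using p(1) pi im unfolding F_def bij_betw_def by auto
      then have "isomorphic (induced (hypercube m) T) (Qminusstar m)"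
        using final_iso[OF p(1), of "{{}, F - {i}}"] \<open>T = Pow F - {{}, F - {i}}\<close> unfolding Qminusstar_def F_def
        by (simp add: insert_commute)
      moreover have "4 \<le> m" using bigm False by simp
      ultimately show ?thesis unfolding iso_to_Qminus_family_def using Tiso isomorphic_trans by blast
    qed
  next
    case False
    show ?thesis
    proof (cases "C = {}")
      case True
      have "T = Pow F - {F, {}}"
      proof
        show "T \<subseteq> Pow F - {F, {}}" using TP T_empty False by blast
        show "Pow F - {F, {}} \<subseteq> T"
        proof
          fix Y assume Y: "Y \<in> Pow F - {F, {}}"
          show "Y \<in> T"
          proof (rule ccontr)
            assume "Y \<notin> T"
            then have "Y = {} \<or> Y = F \<or> (\<exists>i\<in>C. Y = F - {i})" using notT Y by blast
            then show False using Y \<open>Y \<notin> T\<close> True by blast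
          qed
        qed
      qed
      then have "induced (hypercube m) T = Qminusminus m" unfolding Qminusminus_def F_def by simp
      then show ?thesis using Tiso bQQ by simp
    next
      case Cne: False
      obtain \<pi> where p: "bij_betw \<pi> {0..<m} {0..<m}" "\<pi> ` C = {0..<card C}" using perm_exists CF unfolding F_def by blast
      let ?D = "{{}, F} \<union> (\<lambda>i. F - {i}) ` C"
      have Teq: "T = Pow F - ?D"
      proof
        show "T \<subseteq> Pow F - ?D" using TP T_empty False unfolding C_def by auto
        show "Pow F - ?D \<subseteq> T"
        proof
          fix Y assume Y: "Y \<in> Pow F - ?D"
          show "Y \<in> T"
          proof (rule ccontr)
            assume "Y \<notin> T"
            then have "Y = {} \<or> Y = F \<or> (\<exists>i\<in>C. Y = F - {i})" using notT Y by blast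
            then show False using Y by blast
          qed
        qed
      qed
      have DP: "?D \<subseteq> Pow {0..<m}" unfolding F_def by auto
      have "(\<lambda>X. \<pi> ` ({0..<m} - X)) ` ?D = {{0..<m}, {}} \<union> {{i} | i. i < card C}"
      proof -
        have a1: "\<pi> ` ({0..<m} - {}) = {0..<m}" using p(1) unfolding bij_betw_def by simp
        have a2: "\<pi> ` ({0..<m} - F) = {}" unfolding F_def by simp
        have a3: "(\<lambda>X. \<pi> ` ({0..<m} - X)) ` ((\<lambda>i. F - {i}) ` C) = {{i} | i. i < card C}"
        proof -
          have "(\<lambda>X. \<pi> ` ({0..<m} - X)) ` ((\<lambda>i. F - {i}) ` C) = (\<lambda>i. {\<pi> i}) ` C"
            using CF unfolding F_def by (force simp: image_image)
          also have "\<dots> = (\<lambda>i. {i}) ` (\<pi> ` C)" by (simp add: image_image)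
          also have "\<dots> = {{i} | i. i < card C}" using p(2) by auto
          finally show ?thesis .
        qed
        have "(\<lambda>X. \<pi> ` ({0..<m} - X)) ` ?D = {\<pi> ` ({0..<m} - {}), \<pi> ` ({0..<m} - F)} \<union>
            (\<lambda>X. \<pi> ` ({0..<m} - X)) ` ((\<lambda>i. F - {i}) ` C)" by (simp add: image_Un)
        also have "\<dots> = {{0..<m}, {}} \<union> {{i} | i. i < card C}" by (simp only: a1 a2 a3)
        finally show ?thesis .
      qed
      then have "isomorphic (induced (hypercube m) T) (Qminusminus_m m (card C))"
        using final_iso[OF p(1) DP] Teq unfolding Qminusminus_m_def F_def by simp
      moreover have "1 \<le> card C" "card C \<le> m" using Cne CF card_mono[OF _ CF] unfolding F_def
        by (auto simp: Suc_leI card_gt_0_iff finite_subset)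
      moreover have "4 \<le> m" using bigm Cne by simp
      ultimately show ?thesis unfolding iso_to_Qminus_family_def using Tiso isomorphic_trans by blast
    qed
  qed
qed

end


lemma iso_empty: "verts A = {} \<Longrightarrow> verts B = {} \<Longrightarrow> isomorphic A B"
  unfolding isomorphic_def bij_betw_def by auto

theorem mainTheorem17:
  fixes G H :: "'a graph" and m :: nat and \<phi> :: "nat + nat set \<Rightarrow> 'a"
  assumes "partial_cube G"
    and "isometric_subgraph H G"
    and "graph_iso \<phi> (full_subdiv_K m) H"
    and "\<not> (\<exists>x\<in>verts G. \<forall>i<m. (x, \<phi> (Inl i)) \<in> arcs G)"
    and "\<not> isomorphic (conv G H) (Qminus m)"
    and "\<not> isomorphic (conv G H) (Qminusminus m)"
    and "\<forall>H'. subgraph H' H \<and> H' \<noteq> H \<longrightarrow> \<not> good_subdivision G H'"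
  shows "iso_to_Qminus_family (conv G H)"
proof -
  obtain f :: "'a \<Rightarrow> 'a set" where f: "\<forall>v\<in>verts G. finite (f v)"
    "\<forall>u\<in>verts G. \<forall>v\<in>verts G. gdist G u v = card ((f u - f v) \<union> (f v - f u))"
    using assms(1) unfolding partial_cube_def by blast
  have gG: "graph G" and cG: "connected_graph G" using assms(1) unfolding partial_cube_def by auto
  have pcG: "pc G f" unfolding pc_def using gG cG f by (simp add: sd_def)
  have vH: "verts H = \<phi> ` verts (full_subdiv_K m)" using assms(3) unfolding graph_iso_def bij_betw_def by simp
  have HG: "verts H \<subseteq> verts G" "arcs H \<subseteq> arcs G" using assms(2) unfolding isometric_subgraph_def subgraph_def by auto
  consider "m = 0" | "m = 1" | "m = 2" | "3 \<le> m" by linarith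
  then show ?thesis
  proof cases
    case 1
    have vG: "verts G = {}" using assms(4) 1 by auto
    have ce: "convex_set G {}" unfolding convex_set_def by simp
    have "verts H \<subseteq> {}" using HG vG by simp
    then have "{} \<in> {S. convex_set G S \<and> verts H \<subseteq> S}" using ce by simp
    then have "\<Inter>{S. convex_set G S \<and> verts H \<subseteq> S} = {}" by blast
    then have "verts (conv G H) = {}" unfolding conv_def by simp
    moreover have "verts (Qminus m) = {}" unfolding Qminus_def 1 by auto
    ultimately show ?thesis using assms(5) iso_empty by blast
  next
    case 2
    have v1: "verts (full_subdiv_K m) = {Inl 0}" unfolding full_subdiv_K_def 2 by auto
    then have vH1: "verts H = {\<phi> (Inl 0)}" using vH by simp
    let ?x = "\<phi> (Inl 0)"
    have xG: "?x \<in> verts G" using vH1 HG by auto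
    have vG: "verts G = {?x}"
    proof
      show "{?x} \<subseteq> verts G" using xG by simp
      show "verts G \<subseteq> {?x}"
      proof
        fix v assume v: "v \<in> verts G"
        obtain p where p: "walk_betw G ?x p v" using cG xG v unfolding connected_graph_def by blast
        show "v \<in> {?x}"
        proof (cases "length p \<ge> 2")
          case True
          have "p \<noteq> []" using True by auto
          then have "p ! 0 = ?x" using p unfolding walk_betw_def by (simp add: hd_conv_nth)
          moreover have "(p ! 0, p ! Suc 0) \<in> arcs G" "p ! Suc 0 \<in> verts G" using p True unfolding walk_betw_def walk_def by auto
          moreover have "(p ! Suc 0, p ! 0) \<in> arcs G" using calculation(2) gG unfolding graph_def by blast
          ultimately show ?thesis using assms(4) 2 by auto
        next
          case False
          moreover have "p \<noteq> []" using p unfolding walk_betw_def walk_def by auto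
          then have "length p \<ge> 1" by (cases p) auto
          ultimately have "length p = 1" by linarith
          then obtain z where "p = [z]" by (metis One_nat_def length_0_conv length_Suc_conv)
          then show ?thesis using p unfolding walk_betw_def by auto
        qed
      qed
    qed
    have cvx: "convex_set G (verts G)" unfolding convex_set_def walk_betw_def walk_def by auto
    have "\<Inter>{S. convex_set G S \<and> verts H \<subseteq> S} = {?x}"
    proof
      show "\<Inter>{S. convex_set G S \<and> verts H \<subseteq> S} \<subseteq> {?x}" using cvx vG vH1 by blast
      show "{?x} \<subseteq> \<Inter>{S. convex_set G S \<and> verts H \<subseteq> S}" using vH1 by blast
    qed
    then have cv: "conv G H = induced G {?x}" unfolding conv_def by simp
    have pw: "Pow {0::nat} - {{0}} = {{}}" by (auto simp: subset_singleton_iff)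
    have q: "Qminus m = induced (hypercube 1) {{}}" unfolding Qminus_def 2 using pw by simp
    have "isomorphic (induced G {?x}) (induced (hypercube 1) {{}})"
      unfolding isomorphic_def
    proof (intro exI[of _ "\<lambda>_. {}"] conjI ballI)
      show "bij_betw (\<lambda>_. {}) (verts (induced G {?x})) (verts (induced (hypercube 1) {{}}))"
        unfolding bij_betw_def by auto
      fix u v assume "u \<in> verts (induced G {?x})" "v \<in> verts (induced G {?x})"
      then have "u = ?x" "v = ?x" by auto
      moreover have "(?x, ?x) \<notin> arcs G" using gG unfolding graph_def by auto
      ultimately show "(u, v) \<in> arcs (induced G {?x}) \<longleftrightarrow> ({}, {}) \<in> arcs (induced (hypercube 1) {{}})"
        by (simp add: induced_def hypercube_def)
    qed
    then show ?thesis using assms(5) cv q by simp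
  next
    case 3
    have a: "(Inr {0, 1}, Inl 0) \<in> arcs (full_subdiv_K m)" "(Inr {0,1}, Inl 1) \<in> arcs (full_subdiv_K m)"
      using fsK_arc[of 0 m 1] fsK_arc[of 1 m 0] 3 by (auto simp: insert_commute)
    have vv: "Inr {0, 1} \<in> verts (full_subdiv_K m)" "Inl 0 \<in> verts (full_subdiv_K m)" "Inl 1 \<in> verts (full_subdiv_K m)"
      using fsK_Inr[of 0 m 1] fsK_Inl 3 by auto
    have "(\<phi> (Inr {0,1}), \<phi> (Inl 0)) \<in> arcs H" "(\<phi> (Inr {0,1}), \<phi> (Inl 1)) \<in> arcs H"
      using assms(3) a vv unfolding graph_iso_def by blast+
    moreover have "\<phi> (Inr {0,1}) \<in> verts G" using vH vv HG by auto
    ultimately have "\<exists>x\<in>verts G. \<forall>i<m. (x, \<phi> (Inl i)) \<in> arcs G" using HG 3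
      by (intro bexI[of _ "\<phi> (Inr {0,1})"]) (auto simp: less_Suc_eq numeral_2_eq_2)
    then show ?thesis using assms(4) by blast
  next
    case 4
    have s2: "sub2 G f H m \<phi>"
      unfolding sub2_def sub2_axioms_def sub_def sub_axioms_def
      using pcG assms(2,3,4) 4 by (simp add: sub.x_def[OF sub.intro[OF pcG]] sub_axioms_def)
    show ?thesis using sub2.final[OF s2 assms(7,5,6)] .
  qed
qed


end
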